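(* For any $(a,b,c,\lambda),(\bar a,\bar b,\bar c,\bar\lambda)\in(\mathbb F^\times)^4$ the following are equivalent: (i) $(a,b,c,\lambda)\approx(\bar a,\bar b,\bar c,\bar\lambda)$; (ii) there is a $\triangle_q$-module homomorphism $M_\lambda(a,b,c)\to M_{\bar\lambda}(\bar a,\bar b,\bar c)$ sending $m_0$ to $\bar m_0$; (iii) there is a $\triangle_q$-module homomorphism $M_{\bar\lambda}(\bar a,\bar b,\bar c)\to M_\lambda(a,b,c)$ sending $\bar m_0$ to $m_0$; (iv) there is a $\triangle_q$-module isomorphism $M_\lambda(a,b,c)\to M_{\bar\lambda}(\bar a,\bar b,\bar c)$ sending $m_0$ to $\bar m_0$; (v) there is a $\triangle_q$-module isomorphism $M_{\bar\lambda}(\bar a,\bar b,\bar c)\to M_\lambda(a,b,c)$ sending $\bar m_0$ to $m_0$.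
   Context: $\mathbb F$ is an algebraically closed field and $q\in\mathbb F^\times$ a root of unity of order $d\notin\{1,2,4\}$. $\sqrt{x}$ denotes a fixed square root. $\triangle_q$ is the unital associative $\mathbb F$-algebra with generators $A,B,C$ subject to: each of $A+\frac{qBC-q^{-1}CB}{q^2-q^{-2}}$, $B+\frac{qCA-q^{-1}AC}{q^2-q^{-2}}$, $C+\frac{qAB-q^{-1}BA}{q^2-q^{-2}}$ is central; $\alpha,\beta,\gamma$ are these times $q+q^{-1}$. For $(a,b,c,\lambda)\in(\mathbb F^\times)^4$, $i\in\mathbb N$: $\theta_i=a\lambda^{-1}q^{2i}+a^{-1}\lambda q^{-2i}$, $\theta_i^*=b\lambda^{-1}q^{2i}+b^{-1}\lambda q^{-2i}$, $\varphi_i=a^{-1}b^{-1}\lambda q(q^i-q^{-i})(\lambda^{-1}q^{i-1}-\lambda q^{1-i})(q^{-i}-abc\lambda^{-1}q^{i-1})(q^{-i}-abc^{-1}\lambda^{-1}q^{i-1})$. $M_\lambda(a,b,c)$ is the $\triangle_q$-module with basis $\{m_i\}_{i\in\mathbb N}$, $(A-\theta_i)m_i=m_{i+1}$, $(B-\theta_i^* )m_i=\varphi_im_{i-1}$, with $\alpha,\beta,\gamma$ acting as $(b+b^{-1})(c+c^{-1})+(a+a^{-1})(\lambda q+\lambda^{-1}q^{-1})$, $(c+c^{-1})(a+a^{-1})+(b+b^{-1})(\lambda q+\lambda^{-1}q^{-1})$, $(a+a^{-1})(b+b^{-1})+(c+c^{-1})(\lambda q+\lambda^{-1}q^{-1})$;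 $\{\bar m_i\}$ denotes the corresponding basis of $M_{\bar\lambda}(\bar a,\bar b,\bar c)$. $\{\pm1\}$ acts on $(\mathbb F^\times)^4$ by $(-1)\cdot(a,b,c,\lambda)=(-a,-b,-c,-\lambda)$; with $[\cdot]$ the $\{\pm1\}$-orbit, $\mathfrak S_4$ acts on the right by $[a,b,c,\lambda](1\,2)=[a,b,c^{-1},\lambda]$, $[a,b,c,\lambda](3\,4)=[a^{-1},b,c,\lambda]$, $[a,b,c,\lambda](2\,3)=[a/s,b/s,c/s,\lambda/s]$, $s=\sqrt{abc\lambda q}$; $\approx$ means the $\{\pm1\}$-orbits lie in the same $\mathfrak S_4$-orbit. *)

theory Defs
  imports "HOL-Computational_Algebra.Polynomial"
begin

definition alg_closed_field :: "'a::field itself \<Rightarrow> bool" where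
  "alg_closed_field _ \<longleftrightarrow> (\<forall>p :: 'a poly. degree p \<ge> 1 \<longrightarrow> (\<exists>x. poly p x = 0))"

type_synonym 'a quad = "'a \<times> 'a \<times> 'a \<times> 'a"

definition theta :: "'a::field \<Rightarrow> 'a quad \<Rightarrow> nat \<Rightarrow> 'a" where
  "theta q x i = (case x of (a,b,c,l) \<Rightarrow>
     a * inverse l * q powi (2 * int i) + inverse a * l * q powi (- 2 * int i))"

definition thetas :: "'a::field \<Rightarrow> 'a quad \<Rightarrow> nat \<Rightarrow> 'a" where
  "thetas q x i = (case x of (a,b,c,l) \<Rightarrow>
     b * inverse l * q powi (2 * int i) + inverse b * l * q powi (- 2 * int i))"

definition phi :: "'a::field \<Rightarrow> 'a quad \<Rightarrow> nat \<Rightarrow> 'a" where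
  "phi q x i = (case x of (a,b,c,l) \<Rightarrow>
     inverse a * inverse b * l * q
     * (q powi int i - q powi (- int i))
     * (inverse l * q powi (int i - 1) - l * q powi (1 - int i))
     * (q powi (- int i) - a * b * c * inverse l * q powi (int i - 1))
     * (q powi (- int i) - a * b * inverse c * inverse l * q powi (int i - 1)))"

definition gammaM :: "'a::field \<Rightarrow> 'a quad \<Rightarrow> 'a" where
  "gammaM q x = (case x of (a,b,c,l) \<Rightarrow>
     (a + inverse a) * (b + inverse b) + (c + inverse c) * (l * q + inverse l * inverse q))"

text \<open>The module M_lambda(a,b,c): elements are finitely supported coefficient
  sequences v (v = sum_i v i * m_i).\<close>
definition fin_vec :: "(nat \<Rightarrow> 'a::zero) set" where
  "fin_vec = {v. finite {i. v i \<noteq> 0}}"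

definition basis_vec :: "nat \<Rightarrow> nat \<Rightarrow> 'a::{zero,one}" where
  "basis_vec i = (\<lambda>j. if j = i then 1 else 0)"

definition actA :: "'a::field \<Rightarrow> 'a quad \<Rightarrow> (nat \<Rightarrow> 'a) \<Rightarrow> nat \<Rightarrow> 'a" where
  "actA q x v = (\<lambda>j. theta q x j * v j + (if j = 0 then 0 else v (j - 1)))"

definition actB :: "'a::field \<Rightarrow> 'a quad \<Rightarrow> (nat \<Rightarrow> 'a) \<Rightarrow> nat \<Rightarrow> 'a" where
  "actB q x v = (\<lambda>j. thetas q x j * v j + phi q x (Suc j) * v (Suc j))"

text \<open>C acts as forced by gamma = (q+q^-1)(C + (qAB - q^-1 BA)/(q^2-q^-2)) being the scalar gammaM.\<close>
definition actC :: "'a::field \<Rightarrow> 'a quad \<Rightarrow> (nat \<Rightarrow> 'a) \<Rightarrow> nat \<Rightarrow> 'a" where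
  "actC q x v = (\<lambda>j. gammaM q x / (q + inverse q) * v j
      - (q * actA q x (actB q x v) j - inverse q * actB q x (actA q x v) j)
        / (q ^ 2 - inverse q ^ 2))"

definition is_hom :: "'a::field \<Rightarrow> 'a quad \<Rightarrow> 'a quad \<Rightarrow> ((nat \<Rightarrow> 'a) \<Rightarrow> nat \<Rightarrow> 'a) \<Rightarrow> bool" where
  "is_hom q x y f \<longleftrightarrow>
     (\<forall>v\<in>fin_vec. f v \<in> fin_vec) \<and>
     (\<forall>u\<in>fin_vec. \<forall>v\<in>fin_vec. f (\<lambda>j. u j + v j) = (\<lambda>j. f u j + f v j)) \<and>
     (\<forall>k. \<forall>v\<in>fin_vec. f (\<lambda>j. k * v j) = (\<lambda>j. k * f v j)) \<and>
     (\<forall>v\<in>fin_vec. f (actA q x v) = actA q y (f v)) \<and>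
     (\<forall>v\<in>fin_vec. f (actB q x v) = actB q y (f v)) \<and>
     (\<forall>v\<in>fin_vec. f (actC q x v) = actC q y (f v))"

definition is_iso :: "'a::field \<Rightarrow> 'a quad \<Rightarrow> 'a quad \<Rightarrow> ((nat \<Rightarrow> 'a) \<Rightarrow> nat \<Rightarrow> 'a) \<Rightarrow> bool" where
  "is_iso q x y f \<longleftrightarrow> is_hom q x y f \<and> bij_betw f fin_vec fin_vec"

text \<open>Generator steps of the {+-1} and S_4 actions on representatives.\<close>
definition orbit_step :: "'a::field \<Rightarrow> 'a quad \<Rightarrow> 'a quad \<Rightarrow> bool" where
  "orbit_step q x y \<longleftrightarrow> (case x of (a,b,c,l) \<Rightarrow>
      y = (-a, -b, -c, -l)
    \<or> y = (a, b, inverse c, l)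
    \<or> y = (inverse a, b, c, l)
    \<or> (\<exists>s. s ^ 2 = a * b * c * l * q \<and> y = (a / s, b / s, c / s, l / s)))"

text \<open>x \<approx> y: the {+-1}-orbits of x and y lie in the same S_4-orbit.\<close>
definition approx :: "'a::field \<Rightarrow> 'a quad \<Rightarrow> 'a quad \<Rightarrow> bool" where
  "approx q x y \<longleftrightarrow> (\<lambda>u v. orbit_step q u v \<or> orbit_step q v u)\<^sup>*\<^sup>* x y"

end

theory Submission
  imports Defs
begin

definition thP :: "'a::field \<Rightarrow> 'a \<Rightarrow> 'a \<Rightarrow> 'a \<Rightarrow> 'a" where
  "thP e ie P iP = e * P^2 + ie * iP^2"
definition phP :: "'a::field \<Rightarrow> 'a \<Rightarrow> 'a \<Rightarrow> 'a \<Rightarrow> 'a \<Rightarrow> 'a \<Rightarrow> 'a \<Rightarrow> 'a \<Rightarrow> 'a \<Rightarrow> 'a \<Rightarrow> 'a \<Rightarrow> 'a \<Rightarrow> 'a" where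
  "phP a b c l ia ib ic il q iq P iP = ia*ib*l*q*(P - iP)*(il*P*iq - l*q*iP)*(iP - a*b*c*il*P*iq)*(iP - a*b*ic*il*P*iq)"
definition betaM :: "'a::field \<Rightarrow> 'a quad \<Rightarrow> 'a" where
  "betaM q x = (case x of (a,b,c,l) \<Rightarrow>
     (c + inverse c) * (a + inverse a) + (b + inverse b) * (l * q + inverse l * inverse q))"

lemma pw1: "(q::'a::field) powi (2 * int n) = (q^n)^2"
proof -
  have "q powi (2 * int n) = q powi (int n * 2)" by (simp add: mult.commute)
  also have "\<dots> = (q powi int n) powi 2" by (rule power_int_mult)
  finally show ?thesis by simp
qed
lemma pw2: "(q::'a::field) powi (- 2 * int n) = (inverse q ^ n)^2"
proof -
  have "q powi (- 2 * int n) = q powi (- (2 * int n))" by simp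
  also have "\<dots> = inverse ((q^n)^2)" by (simp only: power_int_minus pw1)
  finally show ?thesis by (simp add: power_inverse)
qed
lemma pw2b: "(q::'a::field) powi (- (2 * int n)) = (inverse q ^ n)^2"
  using pw2[of q n] by simp
lemma pw3: "(q::'a::field) powi (- int n) = inverse q ^ n"
  by (simp add: power_int_minus power_inverse)
lemma pw4: "(q::'a::field) \<noteq> 0 \<Longrightarrow> q powi (int n - 1) = q^n * inverse q"
  by (simp add: power_int_diff divide_inverse)
lemma pw5: "(q::'a::field) \<noteq> 0 \<Longrightarrow> q powi (1 - int n) = q * inverse q ^ n"
  by (simp add: power_int_diff divide_inverse power_inverse)

lemma theta_eq: "(q::'a::field) \<noteq> 0 \<Longrightarrow>
  theta q (a,b,c,l) n = thP (a * inverse l) (inverse a * l) (q^n) (inverse q ^ n)"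
  by (simp add: theta_def thP_def pw1 pw2 pw2b)
lemma thetas_eq: "(q::'a::field) \<noteq> 0 \<Longrightarrow>
  thetas q (a,b,c,l) n = thP (b * inverse l) (inverse b * l) (q^n) (inverse q ^ n)"
  by (simp add: thetas_def thP_def pw1 pw2 pw2b)
lemma phi_eq: "(q::'a::field) \<noteq> 0 \<Longrightarrow>
  phi q (a,b,c,l) n = phP a b c l (inverse a) (inverse b) (inverse c) (inverse l) q (inverse q) (q^n) (inverse q ^ n)"
  by (simp add: phi_def phP_def pw3 pw4 pw5 mult.assoc)

lemma I1p:
  fixes e ie q iq P iP :: "'a::field"
  assumes h: "e*ie = 1" "q*iq = 1" "P*iP = 1"
  shows "thP e ie P iP ^ 2 - (q^2 + iq^2) * thP e ie P iP * thP e ie (q*P) (iq*iP) + thP e ie (q*P) (iq*iP) ^ 2 + (q^2 - iq^2)^2 = 0"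
  using h unfolding thP_def by algebra

lemma I2p:
  fixes e ie q iq P iP :: "'a::field"
  assumes h: "e*ie = 1" "q*iq = 1" "P*iP = 1"
  shows "thP e ie P iP - (q^2 + iq^2) * thP e ie (q*P) (iq*iP) + thP e ie (q*(q*P)) (iq*(iq*iP)) = 0"
  using h unfolding thP_def by algebra

lemma I3p:
  fixes a b c l q P ia ib ic il iq iP :: "'a::field"
  assumes h: "a*ia = 1" "b*ib = 1" "c*ic=1" "l*il=1" "q*iq=1" "P*iP=1"
  shows "(thP (a*il) (ia*l) (q*P) (iq*iP) + thP (a*il) (ia*l) P iP) * (thP (b*il) (ib*l) P iP + thP (b*il) (ib*l) (q*P) (iq*iP))
     + phP a b c l ia ib ic il q iq P iP + phP a b c l ia ib ic il q iq (q*(q*P)) (iq*(iq*iP))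
     - (q^2 + iq^2) * (thP (a*il) (ia*l) (q*P) (iq*iP) * thP (b*il) (ib*l) (q*P) (iq*iP) + thP (a*il) (ia*l) P iP * thP (b*il) (ib*l) P iP
         + phP a b c l ia ib ic il q iq (q*P) (iq*iP))
     + (q - iq)^2 * ((a + ia) * (b + ib) + (c + ic) * (l * q + il * iq)) = 0"
  using h unfolding thP_def phP_def by algebra

lemma I4p:
  fixes a b c l q P ia ib ic il iq iP :: "'a::field"
  assumes h: "a*ia = 1" "b*ib = 1" "c*ic=1" "l*il=1" "q*iq=1" "P*iP=1"
  shows "2 * thP (b*il) (ib*l) (q*P) (iq*iP) * thP (a*il) (ia*l) (q*P) (iq*iP) ^ 2
     + (thP (a*il) (ia*l) (q*P) (iq*iP) + thP (a*il) (ia*l) P iP) * phP a b c l ia ib ic il q iq (q*P) (iq*iP)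
     + phP a b c l ia ib ic il q iq (q*(q*P)) (iq*(iq*iP)) * (thP (a*il) (ia*l) (q*(q*P)) (iq*(iq*iP)) + thP (a*il) (ia*l) (q*P) (iq*iP))
     - (q^2 + iq^2) * (thP (a*il) (ia*l) (q*P) (iq*iP) ^ 2 * thP (b*il) (ib*l) (q*P) (iq*iP)
          + thP (a*il) (ia*l) (q*P) (iq*iP) * phP a b c l ia ib ic il q iq (q*(q*P)) (iq*(iq*iP))
          + phP a b c l ia ib ic il q iq (q*P) (iq*iP) * thP (a*il) (ia*l) (q*P) (iq*iP))
     + (q - iq)^2 * ((a + ia) * (b + ib) + (c + ic) * (l * q + il * iq)) * thP (a*il) (ia*l) (q*P) (iq*iP)
     - (q - iq) * (q^2 - iq^2) * ((c + ic) * (a + ia) + (b + ib) * (l * q + il * iq))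
     + (q^2 - iq^2)^2 * thP (b*il) (ib*l) (q*P) (iq*iP) = 0"
  using h unfolding thP_def phP_def by algebra

lemma phP0: "phP a b c l ia ib ic il q iq 1 1 = 0"
  by (simp add: phP_def)

lemma qinvpow: "(q::'a::field) \<noteq> 0 \<Longrightarrow> q^n * inverse q ^ n = 1"
  by (simp add: power_mult_distrib[symmetric])

lemma einv: "(a::'a::field) \<noteq> 0 \<Longrightarrow> l \<noteq> 0 \<Longrightarrow> a * inverse l * (inverse a * l) = 1"
  by (simp add: field_simps)

lemma I1f:
  fixes q a b c l :: "'a::field"
  assumes nz: "q \<noteq> 0" "a \<noteq> 0" "l \<noteq> 0"
  shows "theta q (a,b,c,l) n ^ 2 - (q^2 + inverse q^2) * theta q (a,b,c,l) n * theta q (a,b,c,l) (Suc n)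
     + theta q (a,b,c,l) (Suc n) ^ 2 + (q^2 - inverse q^2)^2 = 0"
  using I1p[of "a*inverse l" "inverse a * l" q "inverse q" "q^n" "inverse q ^ n"] nz
  by (simp add: theta_eq qinvpow einv)

lemma I2f:
  fixes q a b c l :: "'a::field"
  assumes nz: "q \<noteq> 0" "b \<noteq> 0" "l \<noteq> 0"
  shows "thetas q (a,b,c,l) n - (q^2 + inverse q^2) * thetas q (a,b,c,l) (Suc n) + thetas q (a,b,c,l) (Suc (Suc n)) = 0"
  using I2p[of "b*inverse l" "inverse b * l" q "inverse q" "q^n" "inverse q ^ n"] nz
  by (simp add: thetas_eq qinvpow einv)

lemma I3f:
  fixes q a b c l :: "'a::field"
  assumes nz: "q \<noteq> 0" "a \<noteq> 0" "b \<noteq> 0" "c \<noteq> 0" "l \<noteq> 0"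
  shows "(theta q (a,b,c,l) (Suc n) + theta q (a,b,c,l) n) * (thetas q (a,b,c,l) n + thetas q (a,b,c,l) (Suc n))
     + phi q (a,b,c,l) n + phi q (a,b,c,l) (Suc (Suc n))
     - (q^2 + inverse q^2) * (theta q (a,b,c,l) (Suc n) * thetas q (a,b,c,l) (Suc n) + theta q (a,b,c,l) n * thetas q (a,b,c,l) n
         + phi q (a,b,c,l) (Suc n))
     + (q - inverse q)^2 * gammaM q (a,b,c,l) = 0"
  using I3p[of a "inverse a" b "inverse b" c "inverse c" l "inverse l" q "inverse q" "q^n" "inverse q ^ n"] nz
  by (simp add: theta_eq thetas_eq phi_eq qinvpow gammaM_def)

lemma I4f:
  fixes q a b c l :: "'a::field"
  assumes nz: "q \<noteq> 0" "a \<noteq> 0" "b \<noteq> 0" "c \<noteq> 0" "l \<noteq> 0"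
  shows "2 * thetas q (a,b,c,l) (Suc n) * theta q (a,b,c,l) (Suc n) ^ 2
     + (theta q (a,b,c,l) (Suc n) + theta q (a,b,c,l) n) * phi q (a,b,c,l) (Suc n)
     + phi q (a,b,c,l) (Suc (Suc n)) * (theta q (a,b,c,l) (Suc (Suc n)) + theta q (a,b,c,l) (Suc n))
     - (q^2 + inverse q^2) * (theta q (a,b,c,l) (Suc n) ^ 2 * thetas q (a,b,c,l) (Suc n)
          + theta q (a,b,c,l) (Suc n) * phi q (a,b,c,l) (Suc (Suc n))
          + phi q (a,b,c,l) (Suc n) * theta q (a,b,c,l) (Suc n))
     + (q - inverse q)^2 * gammaM q (a,b,c,l) * theta q (a,b,c,l) (Suc n)
     - (q - inverse q) * (q^2 - inverse q^2) * betaM q (a,b,c,l)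
     + (q^2 - inverse q^2)^2 * thetas q (a,b,c,l) (Suc n) = 0"
  using I4p[of a "inverse a" b "inverse b" c "inverse c" l "inverse l" q "inverse q" "q^n" "inverse q ^ n"] nz
  by (simp add: theta_eq thetas_eq phi_eq qinvpow gammaM_def betaM_def)

lemma I4f0:
  fixes q a b c l :: "'a::field"
  assumes nz: "q \<noteq> 0" "a \<noteq> 0" "b \<noteq> 0" "c \<noteq> 0" "l \<noteq> 0"
  shows "2 * thetas q (a,b,c,l) 0 * theta q (a,b,c,l) 0 ^ 2
     + phi q (a,b,c,l) (Suc 0) * (theta q (a,b,c,l) (Suc 0) + theta q (a,b,c,l) 0)
     - (q^2 + inverse q^2) * (theta q (a,b,c,l) 0 ^ 2 * thetas q (a,b,c,l) 0
          + theta q (a,b,c,l) 0 * phi q (a,b,c,l) (Suc 0))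
     + (q - inverse q)^2 * gammaM q (a,b,c,l) * theta q (a,b,c,l) 0
     - (q - inverse q) * (q^2 - inverse q^2) * betaM q (a,b,c,l)
     + (q^2 - inverse q^2)^2 * thetas q (a,b,c,l) 0 = 0"
  using I4p[of a "inverse a" b "inverse b" c "inverse c" l "inverse l" q "inverse q" "inverse q" q] nz
  by (simp add: theta_eq thetas_eq phi_eq gammaM_def betaM_def phP0)

lemma phi0: "phi q x 0 = 0"
  by (simp add: phi_def split: prod.splits)

lemma Omega_gen:
  fixes th ths ph w :: "nat \<Rightarrow> 'a::field"
  assumes I1: "\<And>n. th n ^ 2 - tt * th n * th (Suc n) + th (Suc n) ^ 2 + KK = 0"
    and I2: "\<And>n. ths n - tt * ths (Suc n) + ths (Suc (Suc n)) = 0"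
    and I3: "\<And>n. (th (Suc n) + th n) * (ths n + ths (Suc n)) + ph n + ph (Suc (Suc n))
       - tt * (th (Suc n) * ths (Suc n) + th n * ths n + ph (Suc n)) + D * G = 0"
    and I4: "\<And>n. 2 * ths (Suc n) * th (Suc n) ^ 2 + (th (Suc n) + th n) * ph (Suc n)
       + ph (Suc (Suc n)) * (th (Suc (Suc n)) + th (Suc n))
       - tt * (th (Suc n) ^ 2 * ths (Suc n) + th (Suc n) * ph (Suc (Suc n)) + ph (Suc n) * th (Suc n))
       + D * G * th (Suc n) - E * Bt + KK * ths (Suc n) = 0"
    and I40: "2 * ths 0 * th 0 ^ 2 + ph (Suc 0) * (th (Suc 0) + th 0)
       - tt * (th 0 ^ 2 * ths 0 + th 0 * ph (Suc 0)) + D * G * th 0 - E * Bt + KK * ths 0 = 0"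
    and ph0: "ph 0 = 0"
  defines "A \<equiv> \<lambda>v j. th j * v j + (if j = 0 then 0 else v (j - 1))"
    and "B \<equiv> \<lambda>v j. ths j * v j + ph (Suc j) * v (Suc j)"
  shows "A (A (B w)) j - tt * A (B (A w)) j + B (A (A w)) j + D * G * A w j - E * Bt * w j + KK * B w j = 0"
proof (cases j)
  case 0
  note h1 = I1[of 0]
  show ?thesis using h1 I40 unfolding 0 A_def B_def by simp algebra
next
  case (Suc m)
  note Sm = Suc
  show ?thesis
  proof (cases m)
    case 0
    note h1 = I1[of "Suc 0"]
    note h2 = I4[of 0]
    note h3 = I3[of 0]
    show ?thesis using h1 h2 h3 ph0 unfolding Sm 0 A_def B_def by simp algebra
  next
    case (Suc k)
    note h1 = I1[of "Suc (Suc k)"]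
    note h2 = I4[of "Suc k"]
    note h3 = I3[of "Suc k"]
    note h4 = I2[of k]
    show ?thesis using h1 h2 h3 h4 unfolding Sm Suc A_def B_def by simp algebra
  qed
qed

lemma Omega:
  fixes q a b c l :: "'a::field"
  assumes nz: "q \<noteq> 0" "a \<noteq> 0" "b \<noteq> 0" "c \<noteq> 0" "l \<noteq> 0"
  shows "actA q (a,b,c,l) (actA q (a,b,c,l) (actB q (a,b,c,l) w)) j
     - (q^2 + inverse q^2) * actA q (a,b,c,l) (actB q (a,b,c,l) (actA q (a,b,c,l) w)) j
     + actB q (a,b,c,l) (actA q (a,b,c,l) (actA q (a,b,c,l) w)) j
     + (q - inverse q)^2 * gammaM q (a,b,c,l) * actA q (a,b,c,l) w j
     - (q - inverse q) * (q^2 - inverse q^2) * betaM q (a,b,c,l) * w j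
     + (q^2 - inverse q^2)^2 * actB q (a,b,c,l) w j = 0"
  using Omega_gen[where th="theta q (a,b,c,l)" and ths="thetas q (a,b,c,l)" and ph="phi q (a,b,c,l)"
     and tt="q^2 + inverse q^2" and KK="(q^2 - inverse q^2)^2" and D="(q - inverse q)^2"
     and G="gammaM q (a,b,c,l)" and E="(q - inverse q) * (q^2 - inverse q^2)" and Bt="betaM q (a,b,c,l)",
     OF I1f[OF nz(1,2,5)] I2f[OF nz(1,3,5)] I3f[OF nz] I4f[OF nz] I4f0[OF nz] phi0]
  unfolding actA_def actB_def by simp

lemma beta_alg_gen:
  fixes q iq sg k X1 X2 X3 Y W Z G Bt :: "'a::field"
  assumes h: "q * iq = 1" "(q + iq) * sg = 1" "(q^2 - iq^2) * k = 1"
    and Om: "X1 - (q^2 + iq^2) * X2 + X3 + (q - iq)^2 * G * Y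
       - (q - iq) * (q^2 - iq^2) * Bt * W + (q^2 - iq^2)^2 * Z = 0"
  shows "q * (G * sg * Y - (q * X2 - iq * X3) * k) - iq * (G * sg * Y - (q * X1 - iq * X2) * k)
     = (q^2 - iq^2) * (Bt * sg * W - Z)"
  using h Om by algebra

lemma beta_alg:
  fixes q X1 X2 X3 Y W Z G Bt :: "'a::field"
  assumes nz: "q \<noteq> 0" "q + inverse q \<noteq> 0" "q^2 - inverse q^2 \<noteq> 0"
    and Om: "X1 - (q^2 + inverse q^2) * X2 + X3 + (q - inverse q)^2 * G * Y
       - (q - inverse q) * (q^2 - inverse q^2) * Bt * W + (q^2 - inverse q^2)^2 * Z = 0"
  shows "q * (G / (q + inverse q) * Y - (q * X2 - inverse q * X3) / (q^2 - inverse q^2))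
     - inverse q * (G / (q + inverse q) * Y - (q * X1 - inverse q * X2) / (q^2 - inverse q^2))
     = (q^2 - inverse q^2) * (Bt / (q + inverse q) * W - Z)"
  using beta_alg_gen[of q "inverse q" "inverse (q + inverse q)" "inverse (q^2 - inverse q^2)", OF _ _ _ Om] nz
  by (simp add: divide_inverse)

lemma actA_comb3: "actA q x (\<lambda>j. s * u j - (t * v j - r * z j) / K) j
   = s * actA q x u j - (t * actA q x v j - r * actA q x z j) / K"
  by (simp add: actA_def divide_inverse algebra_simps)

lemma beta_rel:
  fixes q a b c l :: "'a::field"
  assumes nz: "q \<noteq> 0" "a \<noteq> 0" "b \<noteq> 0" "c \<noteq> 0" "l \<noteq> 0"
    and q4: "q^2 - inverse q^2 \<noteq> 0" "q + inverse q \<noteq> 0"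
  shows "q * actC q (a,b,c,l) (actA q (a,b,c,l) w) j - inverse q * actA q (a,b,c,l) (actC q (a,b,c,l) w) j
    = (q^2 - inverse q^2) * (betaM q (a,b,c,l) / (q + inverse q) * w j - actB q (a,b,c,l) w j)"
proof -
  have e: "actA q (a,b,c,l) (actC q (a,b,c,l) w) j = gammaM q (a,b,c,l) / (q + inverse q) * actA q (a,b,c,l) w j
     - (q * actA q (a,b,c,l) (actA q (a,b,c,l) (actB q (a,b,c,l) w)) j
        - inverse q * actA q (a,b,c,l) (actB q (a,b,c,l) (actA q (a,b,c,l) w)) j) / (q^2 - inverse q^2)"
    unfolding actC_def[of q "(a,b,c,l)" w] by (rule actA_comb3)
  show ?thesis unfolding e
    by (subst actC_def) (rule beta_alg[OF nz(1) q4(2) q4(1) Omega[OF nz]])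
qed

lemma gamma_rel:
  fixes q :: "'a::field"
  assumes "q \<noteq> 0" "q^2 - inverse q^2 \<noteq> 0"
  shows "actB q x (actA q x w) j = q^2 * actA q x (actB q x w) j
     - q * (q^2 - inverse q^2) * (gammaM q x / (q + inverse q) * w j - actC q x w j)"
  using assms by (simp add: actC_def field_simps power2_eq_square)

definition linop :: "((nat \<Rightarrow> 'a::field) \<Rightarrow> nat \<Rightarrow> 'a) \<Rightarrow> bool" where
  "linop f \<longleftrightarrow> (\<forall>v\<in>fin_vec. f v \<in> fin_vec) \<and>
     (\<forall>u\<in>fin_vec. \<forall>v\<in>fin_vec. f (\<lambda>j. u j + v j) = (\<lambda>j. f u j + f v j)) \<and>
     (\<forall>k. \<forall>v\<in>fin_vec. f (\<lambda>j. k * v j) = (\<lambda>j. k * f v j))"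

lemma fin_vec_iff: "v \<in> fin_vec \<longleftrightarrow> (\<exists>N. \<forall>j\<ge>N. v j = 0)"
proof
  assume "v \<in> fin_vec"
  then have "finite {i. v i \<noteq> 0}" by (simp add: fin_vec_def)
  then obtain m where "\<forall>n\<in>{i. v i \<noteq> 0}. n < m" using finite_nat_set_iff_bounded by blast
  then show "\<exists>N. \<forall>j\<ge>N. v j = 0" by (metis leD mem_Collect_eq)
next
  assume "\<exists>N. \<forall>j\<ge>N. v j = 0"
  then obtain N where "\<forall>j\<ge>N. v j = 0" by blast
  then have "{i. v i \<noteq> 0} \<subseteq> {..<N}" by (auto simp: not_less[symmetric])
  then show "v \<in> fin_vec" unfolding fin_vec_def by (auto intro: finite_subset)
qed

lemma fin_vecI: "(\<And>j. j \<ge> N \<Longrightarrow> v j = 0) \<Longrightarrow> v \<in> fin_vec"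
  using fin_vec_iff by blast

lemma fin_vecE: assumes "v \<in> fin_vec" obtains N where "\<And>j. j \<ge> N \<Longrightarrow> v j = 0"
  using assms fin_vec_iff by blast

lemma fin_vec_add: fixes u v :: "nat \<Rightarrow> 'a::field" shows "u \<in> fin_vec \<Longrightarrow> v \<in> fin_vec \<Longrightarrow> (\<lambda>j. u j + v j) \<in> fin_vec"
proof -
  assume "u \<in> fin_vec" "v \<in> fin_vec"
  then obtain N M where "\<And>j. j \<ge> N \<Longrightarrow> u j = 0" "\<And>j. j \<ge> M \<Longrightarrow> v j = 0" by (metis fin_vecE)
  then show ?thesis by (intro fin_vecI[of "max N M"]) auto
qed

lemma fin_vec_smult: fixes v :: "nat \<Rightarrow> 'a::field" shows "v \<in> fin_vec \<Longrightarrow> (\<lambda>j. k * v j) \<in> fin_vec"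
proof -
  assume "v \<in> fin_vec"
  then obtain N where "\<And>j. j \<ge> N \<Longrightarrow> v j = 0" by (metis fin_vecE)
  then show ?thesis by (intro fin_vecI[of N]) auto
qed

lemma fin_vec_comb: fixes u v :: "nat \<Rightarrow> 'a::field" shows "u \<in> fin_vec \<Longrightarrow> v \<in> fin_vec \<Longrightarrow> (\<lambda>j. s * u j + t * v j) \<in> fin_vec"
  using fin_vec_add[OF fin_vec_smult fin_vec_smult] by blast

lemma fin_vec_basis: "basis_vec i \<in> fin_vec"
  by (rule fin_vecI[of "Suc i"]) (simp add: basis_vec_def)

lemma fin_vec_zero: "(\<lambda>j. 0) \<in> fin_vec"
  by (rule fin_vecI[of 0]) simp

lemma fin_vec_actA: "v \<in> fin_vec \<Longrightarrow> actA q x v \<in> fin_vec"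
proof -
  assume "v \<in> fin_vec"
  then obtain N where N: "\<And>j. j \<ge> N \<Longrightarrow> v j = 0" by (metis fin_vecE)
  show ?thesis by (rule fin_vecI[of "Suc N"]) (simp add: actA_def N)
qed

lemma fin_vec_actB: "v \<in> fin_vec \<Longrightarrow> actB q x v \<in> fin_vec"
proof -
  assume "v \<in> fin_vec"
  then obtain N where N: "\<And>j. j \<ge> N \<Longrightarrow> v j = 0" by (metis fin_vecE)
  show ?thesis by (rule fin_vecI[of "N"]) (simp add: actB_def N)
qed

lemma fin_vec_actC: "v \<in> fin_vec \<Longrightarrow> actC q x v \<in> fin_vec"
proof -
  assume v: "v \<in> fin_vec"
  obtain N1 where N1: "\<And>j. j \<ge> N1 \<Longrightarrow> v j = 0" using v by (metis fin_vecE)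
  obtain N2 where N2: "\<And>j. j \<ge> N2 \<Longrightarrow> actA q x (actB q x v) j = 0"
    using fin_vec_actA[OF fin_vec_actB[OF v]] by (metis fin_vecE)
  obtain N3 where N3: "\<And>j. j \<ge> N3 \<Longrightarrow> actB q x (actA q x v) j = 0"
    using fin_vec_actB[OF fin_vec_actA[OF v]] by (metis fin_vecE)
  show ?thesis by (rule fin_vecI[of "max N1 (max N2 N3)"]) (simp add: actC_def N1 N2 N3)
qed

lemma actA_add: "actA q x (\<lambda>j. u j + v j) = (\<lambda>j. actA q x u j + actA q x v j)"
  by (simp add: actA_def fun_eq_iff algebra_simps)
lemma actA_smult: "actA q x (\<lambda>j. k * v j) = (\<lambda>j. k * actA q x v j)"
  by (simp add: actA_def fun_eq_iff algebra_simps)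
lemma actB_add: "actB q x (\<lambda>j. u j + v j) = (\<lambda>j. actB q x u j + actB q x v j)"
  by (simp add: actB_def fun_eq_iff algebra_simps)
lemma actB_smult: "actB q x (\<lambda>j. k * v j) = (\<lambda>j. k * actB q x v j)"
  by (simp add: actB_def fun_eq_iff algebra_simps)
lemma actC_add: "actC q x (\<lambda>j. u j + v j) = (\<lambda>j. actC q x u j + actC q x v j)"
  by (simp add: actC_def actA_add actB_add fun_eq_iff diff_divide_distrib add_divide_distrib algebra_simps)
lemma actC_smult: "actC q x (\<lambda>j. k * v j) = (\<lambda>j. k * actC q x v j)"
  by (simp add: actC_def actA_smult actB_smult fun_eq_iff diff_divide_distrib algebra_simps)

lemma linop_actA: "linop (actA q x)"
  by (simp add: linop_def fin_vec_actA actA_add actA_smult)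
lemma linop_actB: "linop (actB q x)"
  by (simp add: linop_def fin_vec_actB actB_add actB_smult)
lemma linop_actC: "linop (actC q x)"
  by (simp add: linop_def fin_vec_actC actC_add actC_smult)

lemma linop_comp: "linop f \<Longrightarrow> linop g \<Longrightarrow> linop (\<lambda>v. f (g v))"
  unfolding linop_def by (simp add: fin_vec_smult)

lemma linop_id: "linop (\<lambda>v. v)"
  unfolding linop_def by simp

lemma linop_fin: "linop f \<Longrightarrow> v \<in> fin_vec \<Longrightarrow> f v \<in> fin_vec"
  unfolding linop_def by blast

lemma linop_comb: "linop f \<Longrightarrow> u \<in> fin_vec \<Longrightarrow> v \<in> fin_vec \<Longrightarrow>
   f (\<lambda>j. s * u j + t * v j) = (\<lambda>j. s * f u j + t * f v j)"
proof -
  assume f: "linop f" and u: "u \<in> fin_vec" and v: "v \<in> fin_vec"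
  have add: "\<forall>u\<in>fin_vec. \<forall>v\<in>fin_vec. f (\<lambda>j. u j + v j) = (\<lambda>j. f u j + f v j)"
    using f unfolding linop_def by blast
  have "f (\<lambda>j. s * u j + t * v j) = (\<lambda>j. f (\<lambda>j. s * u j) j + f (\<lambda>j. t * v j) j)"
    using add[rule_format, OF fin_vec_smult[OF u] fin_vec_smult[OF v]] by simp
  also have "\<dots> = (\<lambda>j. s * f u j + t * f v j)"
    using f u v unfolding linop_def by simp
  finally show ?thesis .
qed

lemma linop_smult: "linop f \<Longrightarrow> v \<in> fin_vec \<Longrightarrow> f (\<lambda>j. k * v j) = (\<lambda>j. k * f v j)"
  unfolding linop_def by blast

lemma linop_zero: "linop f \<Longrightarrow> f (\<lambda>j. 0) = (\<lambda>j. 0)"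
  using linop_smult[of f "\<lambda>j. 0" 0] fin_vec_zero by simp

lemma linop_ext:
  assumes f: "linop f" and g: "linop g" and b: "\<And>i. f (basis_vec i) = g (basis_vec i)"
    and v: "v \<in> fin_vec"
  shows "f v = g v"
proof -
  define tr where "tr n = (\<lambda>j. if j < n then v j else 0)" for n
  have trfin: "tr n \<in> fin_vec" for n by (rule fin_vecI[of n]) (simp add: tr_def)
  have "f (tr n) = g (tr n)" for n
  proof (induction n)
    case 0
    have "tr 0 = (\<lambda>j. 0)" by (simp add: tr_def)
    then show ?case using linop_zero[OF f] linop_zero[OF g] by simp
  next
    case (Suc n)
    have e: "tr (Suc n) = (\<lambda>j. 1 * tr n j + v n * basis_vec n j)"
      by (auto simp: tr_def basis_vec_def fun_eq_iff less_Suc_eq)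
    show ?case unfolding e
      using linop_comb[OF f trfin fin_vec_basis, where s=1 and t="v n"]
        linop_comb[OF g trfin fin_vec_basis, where s=1 and t="v n"] Suc b by simp
  qed
  moreover obtain N where "\<And>j. j \<ge> N \<Longrightarrow> v j = 0" using v by (metis fin_vecE)
  then have "tr N = v" by (auto simp: tr_def fun_eq_iff not_less)
  ultimately show ?thesis by metis
qed

lemma linop_comb3: "linop f \<Longrightarrow> u1 \<in> fin_vec \<Longrightarrow> u2 \<in> fin_vec \<Longrightarrow> u3 \<in> fin_vec \<Longrightarrow>
   f (\<lambda>j. s1 * u1 j + s2 * u2 j + s3 * u3 j) = (\<lambda>j. s1 * f u1 j + s2 * f u2 j + s3 * f u3 j)"
proof -
  assume f: "linop f" and u: "u1 \<in> fin_vec" "u2 \<in> fin_vec" "u3 \<in> fin_vec"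
  define w where "w = (\<lambda>j. s1 * u1 j + s2 * u2 j)"
  have w: "w \<in> fin_vec" unfolding w_def by (rule fin_vec_comb[OF u(1,2)])
  have fw: "f w = (\<lambda>j. s1 * f u1 j + s2 * f u2 j)" unfolding w_def by (rule linop_comb[OF f u(1,2)])
  have e: "(\<lambda>j. s1 * u1 j + s2 * u2 j + s3 * u3 j) = (\<lambda>j. 1 * w j + s3 * u3 j)" by (simp add: w_def)
  show ?thesis unfolding e linop_comb[OF f w u(3)] fw by simp
qed

lemma linop_comb4: "linop f \<Longrightarrow> u1 \<in> fin_vec \<Longrightarrow> u2 \<in> fin_vec \<Longrightarrow> u3 \<in> fin_vec \<Longrightarrow> u4 \<in> fin_vec \<Longrightarrow>
   f (\<lambda>j. s1 * u1 j + s2 * u2 j + s3 * u3 j + s4 * u4 j)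
   = (\<lambda>j. s1 * f u1 j + s2 * f u2 j + s3 * f u3 j + s4 * f u4 j)"
proof -
  assume f: "linop f" and u: "u1 \<in> fin_vec" "u2 \<in> fin_vec" "u3 \<in> fin_vec" "u4 \<in> fin_vec"
  define w where "w = (\<lambda>j. s1 * u1 j + s2 * u2 j + s3 * u3 j)"
  have w: "w \<in> fin_vec" unfolding w_def by (rule fin_vec_add[OF fin_vec_comb[OF u(1,2)] fin_vec_smult[OF u(3)]])
  have fw: "f w = (\<lambda>j. s1 * f u1 j + s2 * f u2 j + s3 * f u3 j)" unfolding w_def by (rule linop_comb3[OF f u(1,2,3)])
  have e: "(\<lambda>j. s1 * u1 j + s2 * u2 j + s3 * u3 j + s4 * u4 j) = (\<lambda>j. 1 * w j + s4 * u4 j)" by (simp add: w_def)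
  show ?thesis unfolding e linop_comb[OF f w u(4)] fw by simp
qed

section \<open>The universal map\<close>

primrec Tv :: "'a::field \<Rightarrow> 'a quad \<Rightarrow> 'a quad \<Rightarrow> nat \<Rightarrow> nat \<Rightarrow> 'a" where
  "Tv q x y 0 = basis_vec 0"
| "Tv q x y (Suc i) = (\<lambda>k. actA q y (Tv q x y i) k - theta q x i * Tv q x y i k)"

definition Fm :: "'a::field \<Rightarrow> 'a quad \<Rightarrow> 'a quad \<Rightarrow> (nat \<Rightarrow> 'a) \<Rightarrow> nat \<Rightarrow> 'a" where
  "Fm q x y v = (\<lambda>k. \<Sum>i\<in>{i. v i \<noteq> 0}. v i * Tv q x y i k)"

lemma Tv_zero: "i < k \<Longrightarrow> Tv q x y i k = 0"
proof (induction i arbitrary: k)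
  case 0
  then show ?case by (simp add: basis_vec_def)
next
  case (Suc i)
  then have "Tv q x y i k = 0" "Tv q x y i (k - 1) = 0" by auto
  then show ?case using Suc.prems by (simp add: actA_def)
qed

lemma Tv_fin: "Tv q x y i \<in> fin_vec"
  by (rule fin_vecI[of "Suc i"]) (simp add: Tv_zero)

lemma Fm_bound: assumes "\<And>j. j \<ge> N \<Longrightarrow> v j = 0"
  shows "Fm q x y v = (\<lambda>k. \<Sum>i<N. v i * Tv q x y i k)"
proof
  fix k
  have sub: "{i. v i \<noteq> 0} \<subseteq> {..<N}" using assms by (auto simp: not_less[symmetric])
  show "Fm q x y v k = (\<Sum>i<N. v i * Tv q x y i k)"
    unfolding Fm_def by (rule sum.mono_neutral_left[OF finite_lessThan sub]) auto
qed

lemma Fm_basis: "Fm q x y (basis_vec i) = Tv q x y i"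
proof -
  have "Fm q x y (basis_vec i) = (\<lambda>k. \<Sum>j<Suc i. basis_vec i j * Tv q x y j k)"
    by (rule Fm_bound) (simp add: basis_vec_def)
  also have "\<dots> = Tv q x y i"
    by (simp add: basis_vec_def fun_eq_iff if_distrib[of "\<lambda>z. z * _"] sum.delta)
  finally show ?thesis .
qed

lemma linop_Fm: "linop (Fm q x y)"
  unfolding linop_def
proof (intro conjI ballI allI)
  fix v :: "nat \<Rightarrow> 'a" assume v: "v \<in> fin_vec"
  then obtain N where N: "\<And>j. j \<ge> N \<Longrightarrow> v j = 0" by (metis fin_vecE)
  show "Fm q x y v \<in> fin_vec"
    by (rule fin_vecI[of N]) (simp add: Fm_bound[OF N] Tv_zero)
next
  fix u v :: "nat \<Rightarrow> 'a" assume u: "u \<in> fin_vec" and v: "v \<in> fin_vec"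
  obtain N1 where N1: "\<And>j. j \<ge> N1 \<Longrightarrow> u j = 0" using u by (metis fin_vecE)
  obtain N2 where N2: "\<And>j. j \<ge> N2 \<Longrightarrow> v j = 0" using v by (metis fin_vecE)
  have a: "\<And>j. j \<ge> max N1 N2 \<Longrightarrow> u j = 0" "\<And>j. j \<ge> max N1 N2 \<Longrightarrow> v j = 0"
     "\<And>j. j \<ge> max N1 N2 \<Longrightarrow> u j + v j = 0" using N1 N2 by auto
  show "Fm q x y (\<lambda>j. u j + v j) = (\<lambda>j. Fm q x y u j + Fm q x y v j)"
  proof -
    have h3: "Fm q x y (\<lambda>j. u j + v j) = (\<lambda>k. \<Sum>i<max N1 N2. (u i + v i) * Tv q x y i k)"
      by (rule Fm_bound) (use a in auto)
    have h1: "Fm q x y u = (\<lambda>k. \<Sum>i<max N1 N2. u i * Tv q x y i k)" by (rule Fm_bound) (use a in auto)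
    have h2: "Fm q x y v = (\<lambda>k. \<Sum>i<max N1 N2. v i * Tv q x y i k)" by (rule Fm_bound) (use a in auto)
    show ?thesis unfolding h3 h1 h2
      by (simp add: distrib_right sum.distrib)
  qed
next
  fix k :: 'a and v :: "nat \<Rightarrow> 'a" assume v: "v \<in> fin_vec"
  then obtain N where N: "\<And>j. j \<ge> N \<Longrightarrow> v j = 0" by (metis fin_vecE)
  have h3: "Fm q x y (\<lambda>j. k * v j) = (\<lambda>z. \<Sum>i<N. (k * v i) * Tv q x y i z)"
    by (rule Fm_bound) (use N in auto)
  show "Fm q x y (\<lambda>j. k * v j) = (\<lambda>j. k * Fm q x y v j)"
  proof -
    have h1: "Fm q x y v = (\<lambda>z. \<Sum>i<N. v i * Tv q x y i z)" by (rule Fm_bound) (use N in auto)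
    show ?thesis unfolding h3 h1 by (simp add: sum_distrib_left mult.assoc)
  qed
qed

lemma actA_basis: "actA q x (basis_vec i) = (\<lambda>k. theta q x i * basis_vec i k + 1 * basis_vec (Suc i) k)"
  by (auto simp: actA_def basis_vec_def fun_eq_iff)

lemma basis_Suc: "basis_vec (Suc i) = (\<lambda>k. 1 * actA q x (basis_vec i) k + (- theta q x i) * basis_vec i k)"
  by (auto simp: actA_def basis_vec_def fun_eq_iff)

lemma actB_basis0: "actB q x (basis_vec 0) = (\<lambda>k. thetas q x 0 * basis_vec 0 k)"
  by (auto simp: actB_def basis_vec_def fun_eq_iff)

lemma Fm_A: "v \<in> fin_vec \<Longrightarrow> Fm q x y (actA q x v) = actA q y (Fm q x y v)"
proof (rule linop_ext[where f="\<lambda>v. Fm q x y (actA q x v)" and g="\<lambda>v. actA q y (Fm q x y v)"])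
  show "linop (\<lambda>v. Fm q x y (actA q x v))" by (rule linop_comp[OF linop_Fm linop_actA])
  show "linop (\<lambda>v. actA q y (Fm q x y v))" by (rule linop_comp[OF linop_actA linop_Fm])
  fix i
  show "Fm q x y (actA q x (basis_vec i)) = actA q y (Fm q x y (basis_vec i))"
    unfolding actA_basis linop_comb[OF linop_Fm fin_vec_basis fin_vec_basis] Fm_basis
    by (simp add: fun_eq_iff)
qed

definition nzq :: "'a::field quad \<Rightarrow> bool" where
  "nzq x \<longleftrightarrow> (case x of (a,b,c,l) \<Rightarrow> a \<noteq> 0 \<and> b \<noteq> 0 \<and> c \<noteq> 0 \<and> l \<noteq> 0)"

lemma beta_rel':
  fixes q :: "'a::field"
  assumes "q \<noteq> 0" "q^2 - inverse q^2 \<noteq> 0" "q + inverse q \<noteq> 0" "nzq x"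
  shows "q * actC q x (actA q x w) j - inverse q * actA q x (actC q x w) j
    = (q^2 - inverse q^2) * (betaM q x / (q + inverse q) * w j - actB q x w j)"
  using assms beta_rel[of q] unfolding nzq_def by (cases x) auto

lemma C_A_alg:
  fixes q iq X Y W Z Bt K :: "'a::field"
  assumes "q * iq = 1" "q * X - iq * Y = K * (Bt * W - Z)"
  shows "X = iq^2 * Y + K * iq * Bt * W - K * iq * Z"
  using assms by algebra

lemma C_A_rel:
  fixes q :: "'a::field"
  assumes q: "q \<noteq> 0" "q^2 - inverse q^2 \<noteq> 0" "q + inverse q \<noteq> 0" and nx: "nzq x"
  shows "actC q x (actA q x w) j = inverse q ^ 2 * actA q x (actC q x w) j
     + (q^2 - inverse q^2) * inverse q * (betaM q x / (q + inverse q)) * w j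
     - (q^2 - inverse q^2) * inverse q * actB q x w j"
  by (rule C_A_alg[OF _ beta_rel'[OF q nx]]) (use q in simp)

lemma actB_diff: "actB q x (\<lambda>k. u k - t * v k) = (\<lambda>k. actB q x u k - t * actB q x v k)"
  by (simp add: actB_def fun_eq_iff algebra_simps)

lemma actC_diff: "actC q x (\<lambda>k. u k - t * v k) = (\<lambda>k. actC q x u k - t * actC q x v k)"
proof -
  have "(\<lambda>k. u k - t * v k) = (\<lambda>k. u k + (\<lambda>k. (- t) * v k) k)" by simp
  then show ?thesis by (simp only: actC_add actC_smult) simp
qed

lemma basis_Suc': "basis_vec (Suc i) = (\<lambda>k. actA q x (basis_vec i) k - theta q x i * basis_vec i k)"
  by (auto simp: actA_def basis_vec_def fun_eq_iff)

lemma Fm_hom: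
  fixes q :: "'a::field"
  assumes q: "q \<noteq> 0" "q^2 - inverse q^2 \<noteq> 0" "q + inverse q \<noteq> 0"
    and nx: "nzq x" and ny: "nzq y"
    and H1: "thetas q x 0 = thetas q y 0"
    and HC: "actC q y (basis_vec 0) = Fm q x y (actC q x (basis_vec 0))"
    and Hg: "gammaM q x = gammaM q y" and Hb: "betaM q x = betaM q y"
  shows "is_hom q x y (Fm q x y)"
proof -
  let ?K = "q^2 - inverse q^2"
  let ?G = "gammaM q x / (q + inverse q)"
  let ?Bt = "betaM q x / (q + inverse q)"
  have claim: "actB q y (Tv q x y i) = Fm q x y (actB q x (basis_vec i)) \<and>
               actC q y (Tv q x y i) = Fm q x y (actC q x (basis_vec i))" for i
  proof (induction i)
    case 0
    have "actB q y (Tv q x y 0) = Fm q x y (actB q x (basis_vec 0))"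
      unfolding actB_basis0 linop_smult[OF linop_Fm fin_vec_basis] Fm_basis by (simp add: H1 actB_basis0)
    then show ?case using HC by simp
  next
    case (Suc i)
    define e where "e = (basis_vec i :: nat \<Rightarrow> 'a)"
    define T where "T = Tv q x y i"
    have fe: "e \<in> fin_vec" "actB q x e \<in> fin_vec" "actC q x e \<in> fin_vec"
      "actA q x (actB q x e) \<in> fin_vec" "actA q x (actC q x e) \<in> fin_vec"
      unfolding e_def by (auto intro: fin_vec_basis fin_vec_actA fin_vec_actB fin_vec_actC)
    have IHB: "actB q y T = Fm q x y (actB q x e)" and IHC: "actC q y T = Fm q x y (actC q x e)"
      using Suc.IH unfolding T_def e_def by auto
    have TF: "T = Fm q x y e" unfolding T_def e_def Fm_basis ..
    have FA1: "actA q y (Fm q x y (actB q x e)) = Fm q x y (actA q x (actB q x e))"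
      using Fm_A[OF fe(2)] by simp
    have FA2: "actA q y (Fm q x y (actC q x e)) = Fm q x y (actA q x (actC q x e))"
      using Fm_A[OF fe(3)] by simp
    have TS: "Tv q x y (Suc i) = (\<lambda>k. actA q y T k - theta q x i * T k)" unfolding T_def by simp
    have eS: "basis_vec (Suc i) = (\<lambda>k. actA q x e k - theta q x i * e k)" unfolding e_def by (rule basis_Suc')
    have RB: "actB q x (basis_vec (Suc i)) = (\<lambda>k. q^2 * actA q x (actB q x e) k + (- (q * ?K * ?G)) * e k
        + (q * ?K) * actC q x e k + (- theta q x i) * actB q x e k)"
      unfolding eS actB_diff using q by (simp add: fun_eq_iff gamma_rel algebra_simps)
    have LB: "actB q y (Tv q x y (Suc i)) = (\<lambda>k. q^2 * Fm q x y (actA q x (actB q x e)) k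
        + (- (q * ?K * ?G)) * Fm q x y e k
        + (q * ?K) * Fm q x y (actC q x e) k + (- theta q x i) * Fm q x y (actB q x e) k)"
    (is "_ = ?rhs")
    proof -
      have "actB q y (Tv q x y (Suc i)) = (\<lambda>k. q^2 * actA q y (actB q y T) k
         - q * ?K * (gammaM q y / (q + inverse q) * T k - actC q y T k) - theta q x i * actB q y T k)"
        unfolding TS actB_diff using q by (simp add: fun_eq_iff gamma_rel)
      also have "\<dots> = (\<lambda>k. q^2 * actA q y (Fm q x y (actB q x e)) k
         - q * ?K * (gammaM q y / (q + inverse q) * T k - Fm q x y (actC q x e) k) - theta q x i * Fm q x y (actB q x e) k)"
        by (simp only: IHB IHC)
      also have "\<dots> = ?rhs" unfolding FA1 TF Hg by (simp add: fun_eq_iff algebra_simps)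
      finally show ?thesis .
    qed
    have B: "actB q y (Tv q x y (Suc i)) = Fm q x y (actB q x (basis_vec (Suc i)))"
      unfolding LB RB linop_comb4[OF linop_Fm fe(4) fe(1) fe(3) fe(2)] ..
    have RC: "actC q x (basis_vec (Suc i)) = (\<lambda>k. inverse q ^ 2 * actA q x (actC q x e) k
        + (?K * inverse q * ?Bt) * e k + (- (?K * inverse q)) * actB q x e k + (- theta q x i) * actC q x e k)"
      unfolding eS actC_diff by (simp add: fun_eq_iff C_A_rel[OF q nx] algebra_simps)
    have LC: "actC q y (Tv q x y (Suc i)) = (\<lambda>k. inverse q ^ 2 * Fm q x y (actA q x (actC q x e)) k
        + (?K * inverse q * ?Bt) * Fm q x y e k + (- (?K * inverse q)) * Fm q x y (actB q x e) k
        + (- theta q x i) * Fm q x y (actC q x e) k)"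
    (is "_ = ?rhs")
    proof -
      have "actC q y (Tv q x y (Suc i)) = (\<lambda>k. inverse q ^ 2 * actA q y (actC q y T) k
         + ?K * inverse q * (betaM q y / (q + inverse q)) * T k - ?K * inverse q * actB q y T k
         - theta q x i * actC q y T k)"
        unfolding TS actC_diff by (simp add: fun_eq_iff C_A_rel[OF q ny])
      also have "\<dots> = (\<lambda>k. inverse q ^ 2 * actA q y (Fm q x y (actC q x e)) k
         + ?K * inverse q * (betaM q y / (q + inverse q)) * T k - ?K * inverse q * Fm q x y (actB q x e) k
         - theta q x i * Fm q x y (actC q x e) k)"
        by (simp only: IHB IHC)
      also have "\<dots> = ?rhs" unfolding FA2 TF Hb by (simp add: fun_eq_iff algebra_simps)
      finally show ?thesis .
    qed
    have C: "actC q y (Tv q x y (Suc i)) = Fm q x y (actC q x (basis_vec (Suc i)))"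
      unfolding LC RC linop_comb4[OF linop_Fm fe(5) fe(1) fe(2) fe(3)] ..
    show ?case using B C by simp
  qed
  have homB: "Fm q x y (actB q x v) = actB q y (Fm q x y v)" if "v \<in> fin_vec" for v
    by (rule linop_ext[OF linop_comp[OF linop_Fm linop_actB] linop_comp[OF linop_actB linop_Fm] _ that])
       (simp add: Fm_basis claim)
  have homC: "Fm q x y (actC q x v) = actC q y (Fm q x y v)" if "v \<in> fin_vec" for v
    by (rule linop_ext[OF linop_comp[OF linop_Fm linop_actC] linop_comp[OF linop_actC linop_Fm] _ that])
       (simp add: Fm_basis claim)
  show ?thesis unfolding is_hom_def using linop_Fm[of q x y] homB homC Fm_A[of _ q x y]
    unfolding linop_def by blast
qed

section \<open>Homomorphisms\<close>

lemma is_hom_linop: "is_hom q x y f \<Longrightarrow> linop f"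
  unfolding is_hom_def linop_def by blast
lemma is_hom_A: "is_hom q x y f \<Longrightarrow> v \<in> fin_vec \<Longrightarrow> f (actA q x v) = actA q y (f v)"
  unfolding is_hom_def by blast
lemma is_hom_B: "is_hom q x y f \<Longrightarrow> v \<in> fin_vec \<Longrightarrow> f (actB q x v) = actB q y (f v)"
  unfolding is_hom_def by blast
lemma is_hom_C: "is_hom q x y f \<Longrightarrow> v \<in> fin_vec \<Longrightarrow> f (actC q x v) = actC q y (f v)"
  unfolding is_hom_def by blast

lemma hom_inv:
  assumes f: "is_hom q x y f" and g: "is_hom q y x g"
    and f0: "f (basis_vec 0) = basis_vec 0" and g0: "g (basis_vec 0) = basis_vec 0"
    and v: "v \<in> fin_vec"
  shows "g (f v) = v"
proof -
  have lf: "linop f" and lg: "linop g" using f g by (auto intro: is_hom_linop)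
  have b: "g (f (basis_vec i)) = basis_vec i" for i
  proof (induction i)
    case 0
    then show ?case using f0 g0 by simp
  next
    case (Suc i)
    have fe: "f (basis_vec i) \<in> fin_vec" by (rule linop_fin[OF lf fin_vec_basis])
    have "f (basis_vec (Suc i)) = (\<lambda>k. 1 * f (actA q x (basis_vec i)) k + (- theta q x i) * f (basis_vec i) k)"
      unfolding basis_Suc[of i q x] by (rule linop_comb[OF lf fin_vec_actA[OF fin_vec_basis] fin_vec_basis])
    also have "\<dots> = (\<lambda>k. 1 * actA q y (f (basis_vec i)) k + (- theta q x i) * f (basis_vec i) k)"
      using is_hom_A[OF f fin_vec_basis] by simp
    finally have "g (f (basis_vec (Suc i))) = g (\<lambda>k. 1 * actA q y (f (basis_vec i)) k + (- theta q x i) * f (basis_vec i) k)"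
      by simp
    also have "\<dots> = (\<lambda>k. 1 * g (actA q y (f (basis_vec i))) k + (- theta q x i) * g (f (basis_vec i)) k)"
      by (rule linop_comb[OF lg fin_vec_actA[OF fe] fe])
    also have "\<dots> = (\<lambda>k. 1 * actA q x (basis_vec i) k + (- theta q x i) * basis_vec i k)"
      using is_hom_A[OF g fe] Suc.IH by simp
    also have "\<dots> = basis_vec (Suc i)" by (rule basis_Suc[symmetric])
    finally show ?case .
  qed
  show ?thesis
    using linop_ext[OF linop_comp[OF lg lf] linop_id b v] by simp
qed

lemma homs_iso:
  assumes f: "is_hom q x y f" and g: "is_hom q y x g"
    and f0: "f (basis_vec 0) = basis_vec 0" and g0: "g (basis_vec 0) = basis_vec 0"
  shows "is_iso q x y f"
  unfolding is_iso_def
proof (intro conjI f bij_betw_byWitness[where f'=g])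
  show "\<forall>a\<in>fin_vec. g (f a) = a" using hom_inv[OF f g f0 g0] by blast
  show "\<forall>a\<in>fin_vec. f (g a) = a" using hom_inv[OF g f g0 f0] by blast
  show "f ` fin_vec \<subseteq> fin_vec" using linop_fin[OF is_hom_linop[OF f]] by blast
  show "g ` fin_vec \<subseteq> fin_vec" using linop_fin[OF is_hom_linop[OF g]] by blast
qed

definition KC :: "'a::field \<Rightarrow> 'a quad \<Rightarrow> 'a" where
  "KC q x = gammaM q x / (q + inverse q)
     - (q * (theta q x 0 * thetas q x 0) - inverse q * (thetas q x 0 * theta q x 0 + phi q x (Suc 0)))
       / (q^2 - inverse q^2)"
definition muC :: "'a::field \<Rightarrow> 'a quad \<Rightarrow> 'a" where
  "muC q x = - (q * thetas q x 0 - inverse q * thetas q x (Suc 0)) / (q^2 - inverse q^2)"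

lemma actC_basis0: "actC q x (basis_vec 0) = (\<lambda>j. KC q x * basis_vec 0 j + muC q x * basis_vec (Suc 0) j)"
proof
  fix j
  show "actC q x (basis_vec 0) j = KC q x * basis_vec 0 j + muC q x * basis_vec (Suc 0) j"
  proof (cases j)
    case 0
    then show ?thesis by (simp add: actC_def actA_def actB_def basis_vec_def KC_def)
  next
    case (Suc m)
    then show ?thesis
      by (cases m) (simp_all add: actC_def actA_def actB_def basis_vec_def muC_def minus_divide_left)
  qed
qed

lemma HC_suff:
  assumes mu: "muC q x = muC q y"
    and kc: "KC q x - muC q x * theta q x 0 = KC q y - muC q y * theta q y 0"
  shows "actC q y (basis_vec 0) = Fm q x y (actC q x (basis_vec 0))"
proof -
  have "Fm q x y (actC q x (basis_vec 0)) = (\<lambda>j. KC q x * Tv q x y 0 j + muC q x * Tv q x y (Suc 0) j)"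
    unfolding actC_basis0 linop_comb[OF linop_Fm fin_vec_basis fin_vec_basis] Fm_basis ..
  also have "\<dots> = (\<lambda>j. KC q y * basis_vec 0 j + muC q y * basis_vec (Suc 0) j)"
  proof
    fix j
    have kc': "KC q y = KC q x + muC q x * (theta q y 0 - theta q x 0)" using kc mu by (simp add: algebra_simps)
    show "KC q x * Tv q x y 0 j + muC q x * Tv q x y (Suc 0) j = KC q y * basis_vec 0 j + muC q y * basis_vec (Suc 0) j"
      unfolding kc' mu[symmetric] by (cases j) (auto simp: actA_def basis_vec_def algebra_simps)
  qed
  finally show ?thesis unfolding actC_basis0 ..
qed

lemma actC_alt: "actC q x v = (\<lambda>j. (gammaM q x / (q + inverse q)) * v j
   + (- (q / (q^2 - inverse q^2))) * actA q x (actB q x v) j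
   + (inverse q / (q^2 - inverse q^2)) * actB q x (actA q x v) j)"
  by (simp add: actC_def fun_eq_iff diff_divide_distrib algebra_simps)

lemma lin_aux: "(q::'a::field) * X - iq * Y = K * (Bt * E - Z) \<Longrightarrow> q * X + (- iq) * Y = (K * Bt) * E + (- K) * Z"
  by (simp add: algebra_simps)

lemma hom_nec:
  fixes q :: "'a::field"
  assumes q: "q \<noteq> 0" "q^2 - inverse q^2 \<noteq> 0" "q + inverse q \<noteq> 0"
    and nx: "nzq x" and ny: "nzq y"
    and f: "is_hom q x y f" and f0: "f (basis_vec 0) = basis_vec 0"
  shows "thetas q x 0 = thetas q y 0" "muC q x = muC q y"
    "KC q x - muC q x * theta q x 0 = KC q y - muC q y * theta q y 0"
    "gammaM q x = gammaM q y" "betaM q x = betaM q y"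
proof -
  have lf: "linop f" by (rule is_hom_linop[OF f])
  let ?e0 = "basis_vec 0 :: nat \<Rightarrow> 'a" and ?e1 = "basis_vec (Suc 0) :: nat \<Rightarrow> 'a"
  have e0: "?e0 \<in> fin_vec" and e1: "?e1 \<in> fin_vec" by (rule fin_vec_basis)+
  have "(\<lambda>k. thetas q x 0 * basis_vec 0 k) = f (actB q x ?e0)"
    unfolding actB_basis0 linop_smult[OF lf e0] f0 ..
  also have "\<dots> = actB q y ?e0" unfolding is_hom_B[OF f e0] f0 ..
  also have "\<dots> = (\<lambda>k. thetas q y 0 * basis_vec 0 k)" by (rule actB_basis0)
  finally have "(\<lambda>k. thetas q x 0 * basis_vec 0 k) = (\<lambda>k. thetas q y 0 * basis_vec 0 k)" .
  from fun_cong[OF this, of 0] show "thetas q x 0 = thetas q y 0" by (simp add: basis_vec_def)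
  have fe1: "f ?e1 = (\<lambda>k. 1 * actA q y ?e0 k + (- theta q x 0) * ?e0 k)"
    unfolding basis_Suc[of 0 q x] linop_comb[OF lf fin_vec_actA[OF e0] e0] is_hom_A[OF f e0] f0 ..
  have "(\<lambda>j. KC q x * ?e0 j + muC q x * f ?e1 j) = f (actC q x ?e0)"
    unfolding actC_basis0 linop_comb[OF lf e0 e1] f0 ..
  also have "\<dots> = actC q y ?e0" unfolding is_hom_C[OF f e0] f0 ..
  also have "\<dots> = (\<lambda>j. KC q y * ?e0 j + muC q y * ?e1 j)" by (rule actC_basis0)
  finally have CC: "(\<lambda>j. KC q x * ?e0 j + muC q x * f ?e1 j) = (\<lambda>j. KC q y * ?e0 j + muC q y * ?e1 j)" .
  from fun_cong[OF CC, of 1] show mu: "muC q x = muC q y"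
    unfolding fe1 by (simp add: basis_vec_def actA_def)
  from fun_cong[OF CC, of 0] have "KC q x + muC q x * (theta q y 0 - theta q x 0) = KC q y"
    unfolding fe1 by (simp add: basis_vec_def actA_def algebra_simps)
  then show "KC q x - muC q x * theta q x 0 = KC q y - muC q y * theta q y 0"
    using mu by (simp add: algebra_simps)
  let ?G = "\<lambda>z. gammaM q z / (q + inverse q)"
  let ?c1 = "- (q / (q^2 - inverse q^2))" and ?c2 = "inverse q / (q^2 - inverse q^2)"
  have ab: "actA q x (actB q x ?e0) \<in> fin_vec" "actB q x (actA q x ?e0) \<in> fin_vec"
    by (auto intro: fin_vec_actA fin_vec_actB e0)
  have "(\<lambda>j. ?G x * ?e0 j + ?c1 * actA q y (actB q y ?e0) j + ?c2 * actB q y (actA q y ?e0) j)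
      = f (actC q x ?e0)"
    unfolding actC_alt[of q x ?e0] linop_comb3[OF lf e0 ab] f0
      is_hom_A[OF f fin_vec_actB[OF e0]] is_hom_B[OF f e0] is_hom_B[OF f fin_vec_actA[OF e0]] is_hom_A[OF f e0] f0 ..
  also have "\<dots> = actC q y ?e0" unfolding is_hom_C[OF f e0] f0 ..
  also have "\<dots> = (\<lambda>j. ?G y * ?e0 j + ?c1 * actA q y (actB q y ?e0) j + ?c2 * actB q y (actA q y ?e0) j)"
    by (rule actC_alt)
  finally have GG: "(\<lambda>j. ?G x * ?e0 j + ?c1 * actA q y (actB q y ?e0) j + ?c2 * actB q y (actA q y ?e0) j)
      = (\<lambda>j. ?G y * ?e0 j + ?c1 * actA q y (actB q y ?e0) j + ?c2 * actB q y (actA q y ?e0) j)" .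
  from fun_cong[OF GG, of 0] have "?G x = ?G y" by (simp add: basis_vec_def)
  then show "gammaM q x = gammaM q y" using q by (simp add: divide_cancel_right)
  let ?K = "q^2 - inverse q^2"
  let ?Bt = "\<lambda>z. betaM q z / (q + inverse q)"
  have ca: "actC q x (actA q x ?e0) \<in> fin_vec" "actA q x (actC q x ?e0) \<in> fin_vec" "actB q x ?e0 \<in> fin_vec"
    by (auto intro: fin_vec_actA fin_vec_actC fin_vec_actB e0)
  have relx: "(\<lambda>j. q * actC q x (actA q x ?e0) j + (- inverse q) * actA q x (actC q x ?e0) j)
     = (\<lambda>j. (?K * ?Bt x) * ?e0 j + (- ?K) * actB q x ?e0 j)"
    using lin_aux[OF beta_rel'[OF q nx, of ?e0]] by (simp add: fun_eq_iff)
  have rely: "(\<lambda>j. q * actC q y (actA q y ?e0) j + (- inverse q) * actA q y (actC q y ?e0) j)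
     = (\<lambda>j. (?K * ?Bt y) * ?e0 j + (- ?K) * actB q y ?e0 j)"
    using lin_aux[OF beta_rel'[OF q ny, of ?e0]] by (simp add: fun_eq_iff)
  have "f (\<lambda>j. q * actC q x (actA q x ?e0) j + (- inverse q) * actA q x (actC q x ?e0) j)
     = (\<lambda>j. q * actC q y (actA q y ?e0) j + (- inverse q) * actA q y (actC q y ?e0) j)"
    unfolding linop_comb[OF lf ca(1,2)] is_hom_C[OF f fin_vec_actA[OF e0]] is_hom_A[OF f e0]
      is_hom_A[OF f fin_vec_actC[OF e0]] is_hom_C[OF f e0] f0 ..
  also have "\<dots> = (\<lambda>j. (?K * ?Bt y) * ?e0 j + (- ?K) * actB q y ?e0 j)" by (rule rely)
  finally have "(\<lambda>j. (?K * ?Bt x) * ?e0 j + (- ?K) * f (actB q x ?e0) j)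
      = (\<lambda>j. (?K * ?Bt y) * ?e0 j + (- ?K) * actB q y ?e0 j)"
    unfolding relx linop_comb[OF lf e0 ca(3)] f0 .
  then have BB: "(\<lambda>j. (?K * ?Bt x) * ?e0 j + (- ?K) * actB q y ?e0 j)
      = (\<lambda>j. (?K * ?Bt y) * ?e0 j + (- ?K) * actB q y ?e0 j)" unfolding is_hom_B[OF f e0] f0 .
  from fun_cong[OF BB, of 0] have "?K * ?Bt x = ?K * ?Bt y" by (simp add: basis_vec_def)
  then show "betaM q x = betaM q y" using q by (simp add: divide_cancel_right)
qed

section \<open>Invariants\<close>

definition tq :: "'a::field \<Rightarrow> 'a quad \<Rightarrow> 'a quad" where
  "tq q x = (case x of (a,b,c,l) \<Rightarrow> (c / l, inverse (c * l), a * b * q, b * q / a))"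
definition S1 :: "'a::field quad \<Rightarrow> 'a" where "S1 u = (case u of (u1,u2,u3,u4) \<Rightarrow> u1 + u2 + u3 + u4)"
definition S2 :: "'a::field quad \<Rightarrow> 'a" where
  "S2 u = (case u of (u1,u2,u3,u4) \<Rightarrow> u1*u2 + u1*u3 + u1*u4 + u2*u3 + u2*u4 + u3*u4)"
definition S3 :: "'a::field quad \<Rightarrow> 'a" where
  "S3 u = (case u of (u1,u2,u3,u4) \<Rightarrow> u1*u2*u3 + u1*u2*u4 + u1*u3*u4 + u2*u3*u4)"
definition S4 :: "'a::field quad \<Rightarrow> 'a" where "S4 u = (case u of (u1,u2,u3,u4) \<Rightarrow> u1*u2*u3*u4)"
definition b0 :: "'a::field quad \<Rightarrow> 'a" where "b0 x = (case x of (a,b,c,l) \<Rightarrow> b / l)"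

lemma KC_inv:
  fixes q a b c l :: "'a::field"
  assumes nz: "q \<noteq> 0" "a \<noteq> 0" "b \<noteq> 0" "c \<noteq> 0" "l \<noteq> 0"
    and q: "q^2 - inverse q^2 \<noteq> 0" "q + inverse q \<noteq> 0"
  shows "(KC q (a,b,c,l) - muC q (a,b,c,l) * theta q (a,b,c,l) 0) * S4 (tq q (a,b,c,l)) = S3 (tq q (a,b,c,l))"
proof -
  have h: "a * inverse a = 1" "b * inverse b = 1" "c * inverse c = 1" "l * inverse l = 1" "q * inverse q = 1"
    "(q + inverse q) * inverse (q + inverse q) = 1" "(q^2 - inverse q^2) * inverse (q^2 - inverse q^2) = 1"
    using nz q by auto
  show ?thesis
    by (simp add: KC_def muC_def theta_eq thetas_eq phi_eq thP_def phP_def gammaM_def tq_def S3_def S4_def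
        divide_inverse inverse_mult_distrib nz) (use h in algebra)
qed

lemma gamma_inv:
  fixes q a b c l :: "'a::field"
  assumes nz: "q \<noteq> 0" "a \<noteq> 0" "b \<noteq> 0" "c \<noteq> 0" "l \<noteq> 0"
  shows "gammaM q (a,b,c,l) * q * S4 (tq q (a,b,c,l)) = S1 (tq q (a,b,c,l)) * S4 (tq q (a,b,c,l)) + q^2 * S3 (tq q (a,b,c,l))"
proof -
  have h: "a * inverse a = 1" "b * inverse b = 1" "c * inverse c = 1" "l * inverse l = 1" "q * inverse q = 1"
    using nz by auto
  show ?thesis
    by (simp add: gammaM_def tq_def S1_def S3_def S4_def divide_inverse inverse_mult_distrib) (use h in algebra)
qed

lemma beta_inv:
  fixes q a b c l :: "'a::field"
  assumes nz: "q \<noteq> 0" "a \<noteq> 0" "b \<noteq> 0" "c \<noteq> 0" "l \<noteq> 0"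
  shows "betaM q (a,b,c,l) * b0 (a,b,c,l) * q = S2 (tq q (a,b,c,l)) + b0 (a,b,c,l) ^ 2 + q^2"
proof -
  have h: "a * inverse a = 1" "b * inverse b = 1" "c * inverse c = 1" "l * inverse l = 1" "q * inverse q = 1"
    using nz by auto
  show ?thesis
    by (simp add: betaM_def tq_def S2_def b0_def divide_inverse inverse_mult_distrib) (use h in algebra)
qed

lemma S4_inv:
  fixes q a b c l :: "'a::field"
  assumes nz: "q \<noteq> 0" "a \<noteq> 0" "b \<noteq> 0" "c \<noteq> 0" "l \<noteq> 0"
  shows "S4 (tq q (a,b,c,l)) = b0 (a,b,c,l) ^ 2 * q ^ 2"
  using nz by (simp add: tq_def S4_def b0_def field_simps power2_eq_square)

lemma ths_inv:
  fixes q a b c l :: "'a::field"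
  assumes nz: "q \<noteq> 0" "b \<noteq> 0" "l \<noteq> 0"
  shows "thetas q (a,b,c,l) 0 = b0 (a,b,c,l) + inverse (b0 (a,b,c,l))"
    "thetas q (a,b,c,l) (Suc 0) = b0 (a,b,c,l) * q^2 + inverse (b0 (a,b,c,l)) * inverse q ^ 2"
  using nz by (simp_all add: thetas_eq thP_def b0_def field_simps)

definition Inv :: "'a::field \<Rightarrow> 'a quad \<Rightarrow> 'a quad" where
  "Inv q x = (b0 x, S1 (tq q x), S2 (tq q x), S3 (tq q x))"

lemma b0_det:
  fixes B B' q :: "'a::field"
  assumes nz: "B \<noteq> 0" "B' \<noteq> 0" "q \<noteq> 0" and q4: "q^4 \<noteq> 1"
    and e1: "B + inverse B = B' + inverse B'"
    and e2: "B * q^2 + inverse B * inverse q ^ 2 = B' * q^2 + inverse B' * inverse q ^ 2"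
  shows "B = B'"
proof (rule ccontr)
  assume ne: "B \<noteq> B'"
  have h: "B * inverse B = 1" "B' * inverse B' = 1" "q * inverse q = 1" using nz by auto
  have k1: "(B - B') * (B * B' - 1) = 0" using e1 h by algebra
  have k2: "(B - B') * (B * B' * q^4 - 1) = 0" using e2 h by algebra
  from k1 ne have "B * B' = 1" by simp
  moreover from k2 ne have "B * B' * q^4 = 1" by simp
  ultimately show False using q4 by simp
qed

lemma conds_to_inv:
  fixes q :: "'a::field"
  assumes q: "q \<noteq> 0" "q^2 - inverse q^2 \<noteq> 0" "q + inverse q \<noteq> 0" "q^4 \<noteq> 1"
    and nx: "nzq x" and ny: "nzq y"
    and c1: "thetas q x 0 = thetas q y 0" and c2: "muC q x = muC q y"
    and c3: "KC q x - muC q x * theta q x 0 = KC q y - muC q y * theta q y 0"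
    and c4: "gammaM q x = gammaM q y" and c5: "betaM q x = betaM q y"
  shows "Inv q x = Inv q y"
proof -
  obtain a b c l where x: "x = (a,b,c,l)" by (cases x) auto
  obtain a' b' c' l' where y: "y = (a',b',c',l')" by (cases y) auto
  have nzx: "a \<noteq> 0" "b \<noteq> 0" "c \<noteq> 0" "l \<noteq> 0" using nx x by (auto simp: nzq_def)
  have nzy: "a' \<noteq> 0" "b' \<noteq> 0" "c' \<noteq> 0" "l' \<noteq> 0" using ny y by (auto simp: nzq_def)
  have t1: "thetas q x (Suc 0) = thetas q y (Suc 0)"
  proof -
    have "q * thetas q x 0 - inverse q * thetas q x (Suc 0) = q * thetas q y 0 - inverse q * thetas q y (Suc 0)"
      using c2 q(2) by (simp add: muC_def divide_cancel_right) (metis minus_diff_eq neg_equal_iff_equal)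
    then show ?thesis using c1 q(1) by simp
  qed
  have B: "b0 x = b0 y"
    apply (rule b0_det[OF _ _ q(1) q(4)])
    using c1 t1 nzx nzy unfolding x y by (auto simp: b0_def ths_inv[OF q(1)])
  have S4: "S4 (tq q x) = S4 (tq q y)"
    unfolding x y S4_inv[OF q(1) nzx] S4_inv[OF q(1) nzy] using B x y by simp
  have S4nz: "S4 (tq q x) \<noteq> 0" unfolding x S4_inv[OF q(1) nzx] using nzx q(1) by (simp add: b0_def)
  have KCx: "(KC q x - muC q x * theta q x 0) * S4 (tq q x) = S3 (tq q x)"
    using KC_inv[OF q(1) nzx q(2,3)] x by simp
  have KCy: "(KC q y - muC q y * theta q y 0) * S4 (tq q y) = S3 (tq q y)"
    using KC_inv[OF q(1) nzy q(2,3)] y by simp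
  have S3: "S3 (tq q x) = S3 (tq q y)"
    unfolding KCx[symmetric] KCy[symmetric] c3 S4 ..
  have gx: "gammaM q x * q * S4 (tq q x) = S1 (tq q x) * S4 (tq q x) + q^2 * S3 (tq q x)"
    using gamma_inv[OF q(1) nzx] x by simp
  have gy: "gammaM q y * q * S4 (tq q y) = S1 (tq q y) * S4 (tq q y) + q^2 * S3 (tq q y)"
    using gamma_inv[OF q(1) nzy] y by simp
  have "S1 (tq q x) * S4 (tq q x) = S1 (tq q y) * S4 (tq q x)"
    using gx gy unfolding c4 S4 S3 by auto
  then have S1: "S1 (tq q x) = S1 (tq q y)" using S4nz by simp
  have bx: "betaM q x * b0 x * q = S2 (tq q x) + b0 x ^ 2 + q^2" using beta_inv[OF q(1) nzx] x by simp
  have by': "betaM q y * b0 y * q = S2 (tq q y) + b0 y ^ 2 + q^2" using beta_inv[OF q(1) nzy] y by simp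
  have S2: "S2 (tq q x) = S2 (tq q y)"
    using bx by' unfolding c5 B by simp
  show ?thesis unfolding Inv_def using B S1 S2 S3 by simp
qed

lemma inv_to_conds:
  fixes q :: "'a::field"
  assumes q: "q \<noteq> 0" "q^2 - inverse q^2 \<noteq> 0" "q + inverse q \<noteq> 0"
    and nx: "nzq x" and ny: "nzq y" and I: "Inv q x = Inv q y"
  shows "thetas q x 0 = thetas q y 0" "muC q x = muC q y"
    "KC q x - muC q x * theta q x 0 = KC q y - muC q y * theta q y 0"
    "gammaM q x = gammaM q y" "betaM q x = betaM q y"
proof -
  obtain a b c l where x: "x = (a,b,c,l)" by (cases x) auto
  obtain a' b' c' l' where y: "y = (a',b',c',l')" by (cases y) auto
  have nzx: "a \<noteq> 0" "b \<noteq> 0" "c \<noteq> 0" "l \<noteq> 0" using nx x by (auto simp: nzq_def)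
  have nzy: "a' \<noteq> 0" "b' \<noteq> 0" "c' \<noteq> 0" "l' \<noteq> 0" using ny y by (auto simp: nzq_def)
  have B: "b0 x = b0 y" and S1: "S1 (tq q x) = S1 (tq q y)" and S2: "S2 (tq q x) = S2 (tq q y)"
    and S3: "S3 (tq q x) = S3 (tq q y)" using I by (auto simp: Inv_def)
  show c1: "thetas q x 0 = thetas q y 0" using B unfolding x y ths_inv[OF q(1) nzx(2,4)] ths_inv[OF q(1) nzy(2,4)] by simp
  have t1: "thetas q x (Suc 0) = thetas q y (Suc 0)"
    using B unfolding x y ths_inv[OF q(1) nzx(2,4)] ths_inv[OF q(1) nzy(2,4)] by simp
  show "muC q x = muC q y" using c1 t1 by (simp add: muC_def)
  have S4: "S4 (tq q x) = S4 (tq q y)"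
    unfolding x y S4_inv[OF q(1) nzx] S4_inv[OF q(1) nzy] using B x y by simp
  have S4nz: "S4 (tq q x) \<noteq> 0" unfolding x S4_inv[OF q(1) nzx] using nzx q(1) by (simp add: b0_def)
  have KCx: "(KC q x - muC q x * theta q x 0) * S4 (tq q x) = S3 (tq q x)"
    using KC_inv[OF q(1) nzx q(2,3)] x by simp
  have KCy: "(KC q y - muC q y * theta q y 0) * S4 (tq q y) = S3 (tq q y)"
    using KC_inv[OF q(1) nzy q(2,3)] y by simp
  have "(KC q x - muC q x * theta q x 0) * S4 (tq q x) = (KC q y - muC q y * theta q y 0) * S4 (tq q x)"
    using KCx KCy unfolding S3 S4 by simp
  then show "KC q x - muC q x * theta q x 0 = KC q y - muC q y * theta q y 0" using S4nz by simp
  have gx: "gammaM q x * q * S4 (tq q x) = S1 (tq q x) * S4 (tq q x) + q^2 * S3 (tq q x)"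
    using gamma_inv[OF q(1) nzx] x by simp
  have gy: "gammaM q y * q * S4 (tq q y) = S1 (tq q y) * S4 (tq q y) + q^2 * S3 (tq q y)"
    using gamma_inv[OF q(1) nzy] y by simp
  have "gammaM q x * (q * S4 (tq q x)) = gammaM q y * (q * S4 (tq q x))"
    using gx gy unfolding S1 S3 S4 by (simp add: mult.assoc)
  then show "gammaM q x = gammaM q y" using S4nz q(1) by simp
  have B0nz: "b0 x \<noteq> 0" using nzx x by (simp add: b0_def)
  have bx: "betaM q x * b0 x * q = S2 (tq q x) + b0 x ^ 2 + q^2" using beta_inv[OF q(1) nzx] x by simp
  have by': "betaM q y * b0 y * q = S2 (tq q y) + b0 y ^ 2 + q^2" using beta_inv[OF q(1) nzy] y by simp
  have "betaM q x * (b0 x * q) = betaM q y * (b0 x * q)"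
    using bx by' unfolding S2 B by (simp add: mult.assoc)
  then show "betaM q x = betaM q y" using B0nz q(1) by simp
qed

section \<open>Orbit combinatorics\<close>

definition m12 :: "'a::field quad \<Rightarrow> 'a quad" where "m12 x = (case x of (a,b,c,l) \<Rightarrow> (a,b,inverse c,l))"
definition m34 :: "'a::field quad \<Rightarrow> 'a quad" where "m34 x = (case x of (a,b,c,l) \<Rightarrow> (inverse a,b,c,l))"
definition sq :: "'a::field \<Rightarrow> 'a quad \<Rightarrow> 'a" where
  "sq q x = (SOME s. s^2 = (case x of (a,b,c,l) \<Rightarrow> a*b*c*l*q))"
definition m23 :: "'a::field \<Rightarrow> 'a quad \<Rightarrow> 'a quad" where
  "m23 q x = (case x of (a,b,c,l) \<Rightarrow> (a / sq q x, b / sq q x, c / sq q x, l / sq q x))"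

lemma sqrt_ex: assumes "alg_closed_field TYPE('a::field)" shows "\<exists>s::'a. s^2 = z"
proof -
  have "degree [:-z, 0, 1::'a:] \<ge> 1" by simp
  then obtain s where "poly [:-z, 0, 1::'a:] s = 0" using assms unfolding alg_closed_field_def by blast
  then have "s^2 = z" by (simp add: power2_eq_square algebra_simps)
  then show ?thesis by blast
qed

lemma sq_prop: assumes "alg_closed_field TYPE('a::field)"
  shows "sq q (a,b,c,l) ^ 2 = (a*b*c*l*q :: 'a)"
  unfolding sq_def using someI_ex[OF sqrt_ex[OF assms]] by simp

lemma approx_refl: "approx q x x"
  unfolding approx_def by simp
lemma approx_step: "orbit_step q x y \<Longrightarrow> approx q x y"
  unfolding approx_def by (rule r_into_rtranclp) simp
lemma approx_trans: "approx q x y \<Longrightarrow> approx q y z \<Longrightarrow> approx q x z"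
  unfolding approx_def by (rule rtranclp_trans)

lemma m12_props:
  assumes "nzq x" "tq q x = (u1,u2,u3,u4)"
  shows "nzq (m12 x)" "b0 (m12 x) = b0 x" "tq q (m12 x) = (u2,u1,u3,u4)" "approx q x (m12 x)"
proof -
  obtain a b c l where x: "x = (a,b,c,l)" by (cases x) auto
  show "nzq (m12 x)" "b0 (m12 x) = b0 x" using assms unfolding x by (auto simp: nzq_def m12_def b0_def)
  show "tq q (m12 x) = (u2,u1,u3,u4)" using assms unfolding x by (auto simp: nzq_def m12_def tq_def field_simps)
  show "approx q x (m12 x)" by (rule approx_step) (simp add: x orbit_step_def m12_def)
qed

lemma m34_props:
  assumes "nzq x" "tq q x = (u1,u2,u3,u4)"
  shows "nzq (m34 x)" "b0 (m34 x) = b0 x" "tq q (m34 x) = (u1,u2,u4,u3)" "approx q x (m34 x)"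
proof -
  obtain a b c l where x: "x = (a,b,c,l)" by (cases x) auto
  show "nzq (m34 x)" "b0 (m34 x) = b0 x" using assms unfolding x by (auto simp: nzq_def m34_def b0_def)
  show "tq q (m34 x) = (u1,u2,u4,u3)" using assms unfolding x by (auto simp: nzq_def m34_def tq_def field_simps)
  show "approx q x (m34 x)" by (rule approx_step) (simp add: x orbit_step_def m34_def)
qed

lemma m23_props:
  assumes ac: "alg_closed_field TYPE('a::field)" and q: "(q::'a) \<noteq> 0"
    and "nzq x" "tq q x = (u1,u2,u3,u4)"
  shows "nzq (m23 q x)" "b0 (m23 q x) = b0 x" "tq q (m23 q x) = (u1,u3,u2,u4)" "approx q x (m23 q x)"
proof -
  obtain a b c l where x: "x = (a,b,c,l)" by (cases x) auto
  have nz: "a \<noteq> 0" "b \<noteq> 0" "c \<noteq> 0" "l \<noteq> 0" using assms x by (auto simp: nzq_def)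
  define s where "s = sq q x"
  have s2: "s^2 = a*b*c*l*q" unfolding s_def x by (rule sq_prop[OF ac])
  have s0: "s \<noteq> 0" using s2 nz q by auto
  have m: "m23 q x = (a/s, b/s, c/s, l/s)" unfolding m23_def s_def x by simp
  show "nzq (m23 q x)" "b0 (m23 q x) = b0 x" unfolding m using nz s0 x by (auto simp: nzq_def b0_def)
  have u: "u1 = c/l" "u2 = inverse (c*l)" "u3 = a*b*q" "u4 = b*q/a" using assms(4) x by (auto simp: tq_def)
  have e2: "inverse (c/s * (l/s)) = a*b*q" using s0 nz q s2 by (simp add: field_simps power2_eq_square)
  have e3: "a/s * (b/s) * q = inverse (c*l)" using s0 nz q s2 by (simp add: field_simps power2_eq_square)
  have e1: "c/s / (l/s) = c/l" and e4: "b/s*q/(a/s) = b*q/a" using s0 by auto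
  show "tq q (m23 q x) = (u1,u3,u2,u4)" unfolding m tq_def prod.case e1 e2 e3 e4 u ..
  have "orbit_step q x (m23 q x)" unfolding m unfolding x orbit_step_def prod.case using s2 by blast
  then show "approx q x (m23 q x)" by (rule approx_step)
qed

lemma fin_eq:
  assumes q: "(q::'a::field) \<noteq> 0" and nx: "nzq x" and ny: "nzq y" and B: "b0 x = b0 y" and T: "tq q x = tq q y"
  shows "approx q x y"
proof -
  obtain a b c l where x: "x = (a,b,c,l)" by (cases x) auto
  obtain a' b' c' l' where y: "y = (a',b',c',l')" by (cases y) auto
  have nzx: "a \<noteq> 0" "b \<noteq> 0" "c \<noteq> 0" "l \<noteq> 0" using nx x by (auto simp: nzq_def)
  have nzy: "a' \<noteq> 0" "b' \<noteq> 0" "c' \<noteq> 0" "l' \<noteq> 0" using ny y by (auto simp: nzq_def)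
  have e1: "c / l = c' / l'" and e2: "inverse (c*l) = inverse (c'*l')" and e3: "a*b*q = a'*b'*q"
    and e5: "b / l = b' / l'" using T B x y by (auto simp: tq_def b0_def)
  have e2': "c * l = c' * l'" using e2 by (metis inverse_inverse_eq)
  have cc: "c' = c * l' / l" using e1 nzx nzy by (simp add: field_simps)
  have bb: "b' = b * l' / l" using e5 nzx nzy by (simp add: field_simps)
  have "c * l * l = c * l' * l'" using e2' cc nzx by (simp add: field_simps)
  then have "l' ^ 2 = l ^ 2" using nzx by (simp add: power2_eq_square)
  then have "l' = l \<or> l' = - l" by (simp add: power2_eq_iff)
  then show ?thesis
  proof
    assume ll: "l' = l"
    have "c' = c" "b' = b" using cc bb ll nzx by auto
    moreover have "a' = a" using e3 \<open>b' = b\<close> nzx q by simp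
    ultimately show ?thesis using x y ll approx_refl by simp
  next
    assume ll: "l' = - l"
    have "c' = - c" "b' = - b" using cc bb ll nzx by auto
    moreover have "a' = - a"
    proof -
      have "(a' + a) * (b * q) = 0" using e3 \<open>b' = - b\<close> by (simp add: algebra_simps)
      then have "a' + a = 0" using nzx q by simp
      then show ?thesis by (simp add: eq_neg_iff_add_eq_0)
    qed
    ultimately show ?thesis using x y ll by (auto intro!: approx_step simp: orbit_step_def)
  qed
qed

lemma root2: "(u3::'a::field) + u4 = v3 + v4 \<Longrightarrow> u3 * u4 = v3 * v4 \<Longrightarrow> v3 = u3 \<or> v3 = u4"
proof -
  assume h: "u3 + u4 = v3 + v4" "u3 * u4 = v3 * v4"
  have "(v3 - u3) * (v3 - u4) = 0" using h by algebra
  then show ?thesis by simp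
qed

lemma root3: "(u2::'a::field) + u3 + u4 = v2 + v3 + v4 \<Longrightarrow> u2*u3 + u2*u4 + u3*u4 = v2*v3 + v2*v4 + v3*v4
   \<Longrightarrow> u2*u3*u4 = v2*v3*v4 \<Longrightarrow> v2 = u2 \<or> v2 = u3 \<or> v2 = u4"
proof -
  assume h: "u2 + u3 + u4 = v2 + v3 + v4" "u2*u3 + u2*u4 + u3*u4 = v2*v3 + v2*v4 + v3*v4" "u2*u3*u4 = v2*v3*v4"
  have "(v2 - u2) * (v2 - u3) * (v2 - u4) = 0" using h by algebra
  then show ?thesis by simp
qed

lemma root4:
  assumes "S1 (u1,u2,u3,u4) = S1 (v1,v2,v3,v4)" "S2 (u1,u2,u3,u4) = S2 (v1,v2,v3,v4)"
    "S3 (u1,u2,u3,u4) = S3 (v1,v2,v3,v4)" "S4 (u1,u2,u3,u4) = (S4 (v1,v2,v3,v4) :: 'a::field)"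
  shows "v1 = u1 \<or> v1 = u2 \<or> v1 = u3 \<or> v1 = u4"
proof -
  have "(v1 - u1) * (v1 - u2) * (v1 - u3) * (v1 - u4) = 0" using assms unfolding S1_def S2_def S3_def S4_def
    by simp algebra
  then show ?thesis by simp
qed

lemma L2:
  assumes q: "(q::'a::field) \<noteq> 0" and nx: "nzq x" and ny: "nzq y" and B: "b0 x = b0 y"
    and tx: "tq q x = (u1,u2,u3,u4)" and ty: "tq q y = (u1,u2,v3,v4)"
    and h: "u3 + u4 = v3 + v4" "u3 * u4 = v3 * v4"
  shows "approx q x y"
proof -
  from root2[OF h] show ?thesis
  proof
    assume "v3 = u3"
    then have "v4 = u4" using h by simp
    then show ?thesis using fin_eq[OF q nx ny B] tx ty \<open>v3 = u3\<close> by simp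
  next
    assume v3: "v3 = u4"
    then have "v4 = u3" using h by simp
    note m = m34_props[OF nx tx]
    have "approx q (m34 x) y" using fin_eq[OF q m(1) ny] m(2,3) B ty v3 \<open>v4 = u3\<close> by simp
    then show ?thesis using approx_trans[OF m(4)] by blast
  qed
qed

lemma L3:
  assumes ac: "alg_closed_field TYPE('a::field)" and q: "(q::'a) \<noteq> 0" and nx: "nzq x" and ny: "nzq y" and B: "b0 x = b0 y"
    and tx: "tq q x = (u1,u2,u3,u4)" and ty: "tq q y = (u1,v2,v3,v4)"
    and h: "u2 + u3 + u4 = v2 + v3 + v4" "u2*u3 + u2*u4 + u3*u4 = v2*v3 + v2*v4 + v3*v4" "u2*u3*u4 = v2*v3*v4"
  shows "approx q x y"
proof -
  from root3[OF h] consider "v2 = u2" | "v2 = u3" | "v2 = u4" by blast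
  then show ?thesis
  proof cases
    case 1
    have g: "u3 + u4 = v3 + v4" "u3 * u4 = v3 * v4" using h 1 by algebra+
    show ?thesis by (rule L2[OF q nx ny B tx _ g]) (simp add: ty 1)
  next
    case 2
    note m = m23_props[OF ac q nx tx]
    have g: "u2 + u4 = v3 + v4" "u2 * u4 = v3 * v4" using h 2 by algebra+
    have "approx q (m23 q x) y" by (rule L2[OF q m(1) ny _ m(3) _ g]) (simp_all add: B m(2) ty 2)
    then show ?thesis using approx_trans[OF m(4)] by blast
  next
    case 3
    note m1 = m34_props[OF nx tx]
    note m = m23_props[OF ac q m1(1) m1(3)]
    have g: "u2 + u3 = v3 + v4" "u2 * u3 = v3 * v4" using h 3 by algebra+
    have "approx q (m23 q (m34 x)) y" by (rule L2[OF q m(1) ny _ m(3) _ g]) (simp_all add: B m(2) m1(2) ty 3)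
    then show ?thesis using approx_trans[OF m1(4) approx_trans[OF m(4)]] by blast
  qed
qed

lemma L4:
  assumes ac: "alg_closed_field TYPE('a::field)" and q: "(q::'a) \<noteq> 0" and nx: "nzq x" and ny: "nzq y" and B: "b0 x = b0 y"
    and tx: "tq q x = (u1,u2,u3,u4)" and ty: "tq q y = (v1,v2,v3,v4)"
    and h: "S1 (u1,u2,u3,u4) = S1 (v1,v2,v3,v4)" "S2 (u1,u2,u3,u4) = S2 (v1,v2,v3,v4)"
    "S3 (u1,u2,u3,u4) = S3 (v1,v2,v3,v4)" "S4 (u1,u2,u3,u4) = S4 (v1,v2,v3,v4)"
  shows "approx q x y"
proof -
  have h': "u1 + u2 + u3 + u4 = v1 + v2 + v3 + v4"
    "u1*u2 + u1*u3 + u1*u4 + u2*u3 + u2*u4 + u3*u4 = v1*v2 + v1*v3 + v1*v4 + v2*v3 + v2*v4 + v3*v4"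
    "u1*u2*u3 + u1*u2*u4 + u1*u3*u4 + u2*u3*u4 = v1*v2*v3 + v1*v2*v4 + v1*v3*v4 + v2*v3*v4"
    using h unfolding S1_def S2_def S3_def by simp_all
  from root4[OF h] consider "v1 = u1" | "v1 = u2" | "v1 = u3" | "v1 = u4" by blast
  then show ?thesis
  proof cases
    case 1
    have g: "u2 + u3 + u4 = v2 + v3 + v4" "u2*u3 + u2*u4 + u3*u4 = v2*v3 + v2*v4 + v3*v4" "u2*u3*u4 = v2*v3*v4"
      using h' 1 by algebra+
    show ?thesis by (rule L3[OF ac q nx ny B tx _ g]) (simp add: ty 1)
  next
    case 2
    note m = m12_props[OF nx tx]
    have g: "u1 + u3 + u4 = v2 + v3 + v4" "u1*u3 + u1*u4 + u3*u4 = v2*v3 + v2*v4 + v3*v4" "u1*u3*u4 = v2*v3*v4"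
      using h' 2 by algebra+
    have "approx q (m12 x) y" by (rule L3[OF ac q m(1) ny _ m(3) _ g]) (simp_all add: B m(2) ty 2)
    then show ?thesis using approx_trans[OF m(4)] by blast
  next
    case 3
    note m1 = m23_props[OF ac q nx tx]
    note m = m12_props[OF m1(1) m1(3)]
    have g: "u1 + u2 + u4 = v2 + v3 + v4" "u1*u2 + u1*u4 + u2*u4 = v2*v3 + v2*v4 + v3*v4" "u1*u2*u4 = v2*v3*v4"
      using h' 3 by algebra+
    have "approx q (m12 (m23 q x)) y" by (rule L3[OF ac q m(1) ny _ m(3) _ g]) (simp_all add: B m(2) m1(2) ty 3)
    then show ?thesis using approx_trans[OF m1(4) approx_trans[OF m(4)]] by blast
  next
    case 4
    note m1 = m34_props[OF nx tx]
    note m2 = m23_props[OF ac q m1(1) m1(3)]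
    note m = m12_props[OF m2(1) m2(3)]
    have g: "u1 + u2 + u3 = v2 + v3 + v4" "u1*u2 + u1*u3 + u2*u3 = v2*v3 + v2*v4 + v3*v4" "u1*u2*u3 = v2*v3*v4"
      using h' 4 by algebra+
    have "approx q (m12 (m23 q (m34 x))) y" by (rule L3[OF ac q m(1) ny _ m(3) _ g]) (simp_all add: B m(2) m2(2) m1(2) ty 4)
    then show ?thesis using approx_trans[OF m1(4) approx_trans[OF m2(4) approx_trans[OF m(4)]]] by blast
  qed
qed

lemma reach:
  assumes ac: "alg_closed_field TYPE('a::field)" and q: "(q::'a) \<noteq> 0" and nx: "nzq x" and ny: "nzq y"
    and I: "Inv q x = Inv q y"
  shows "approx q x y"
proof -
  obtain u1 u2 u3 u4 where tx: "tq q x = (u1,u2,u3,u4)" by (cases "tq q x") auto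
  obtain v1 v2 v3 v4 where ty: "tq q y = (v1,v2,v3,v4)" by (cases "tq q y") auto
  have B: "b0 x = b0 y" using I by (simp add: Inv_def)
  obtain a b c l where x: "x = (a,b,c,l)" by (cases x) auto
  obtain a' b' c' l' where y: "y = (a',b',c',l')" by (cases y) auto
  have nzx: "a \<noteq> 0" "b \<noteq> 0" "c \<noteq> 0" "l \<noteq> 0" using nx x by (auto simp: nzq_def)
  have nzy: "a' \<noteq> 0" "b' \<noteq> 0" "c' \<noteq> 0" "l' \<noteq> 0" using ny y by (auto simp: nzq_def)
  have S4: "S4 (tq q x) = S4 (tq q y)"
    unfolding x y S4_inv[OF q nzx] S4_inv[OF q nzy] using B x y by simp
  show ?thesis
    by (rule L4[OF ac q nx ny B tx ty]) (use I S4 tx ty in \<open>simp_all add: Inv_def\<close>)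
qed

lemma perm_S:
  "S1 (u2,u1,u3,u4) = S1 (u1,u2,u3,u4)" "S2 (u2,u1,u3,u4) = S2 (u1,u2,u3,u4)" "S3 (u2,u1,u3,u4) = S3 (u1,u2,u3,u4)"
  "S1 (u1,u2,u4,u3) = S1 (u1,u2,u3,u4)" "S2 (u1,u2,u4,u3) = S2 (u1,u2,u3,u4)" "S3 (u1,u2,u4,u3) = S3 (u1,u2,u3,u4)"
  "S1 (u1,u3,u2,u4) = S1 (u1,u2,u3,u4)" "S2 (u1,u3,u2,u4) = S2 (u1,u2,u3,u4)" "S3 (u1,u3,u2,u4) = (S3 (u1,u2,u3,u4) :: 'a::field)"
  by (simp_all add: S1_def S2_def S3_def algebra_simps)

lemma div_props:
  fixes q a b c l s :: "'a::field"
  assumes q: "q \<noteq> 0" and nz: "a \<noteq> 0" "b \<noteq> 0" "c \<noteq> 0" "l \<noteq> 0" and s2: "s^2 = a*b*c*l*q"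
    and tx: "tq q (a,b,c,l) = (u1,u2,u3,u4)"
  shows "nzq (a/s, b/s, c/s, l/s)" "b0 (a/s, b/s, c/s, l/s) = b0 (a,b,c,l)" "tq q (a/s, b/s, c/s, l/s) = (u1,u3,u2,u4)"
proof -
  have s0: "s \<noteq> 0" using s2 nz q by auto
  show "nzq (a/s, b/s, c/s, l/s)" "b0 (a/s, b/s, c/s, l/s) = b0 (a,b,c,l)" using nz s0 by (auto simp: nzq_def b0_def)
  have u: "u1 = c/l" "u2 = inverse (c*l)" "u3 = a*b*q" "u4 = b*q/a" using tx by (auto simp: tq_def)
  have e2: "inverse (c/s * (l/s)) = a*b*q" using s0 nz q s2 by (simp add: field_simps power2_eq_square)
  have e3: "a/s * (b/s) * q = inverse (c*l)" using s0 nz q s2 by (simp add: field_simps power2_eq_square)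
  have e1: "c/s / (l/s) = c/l" and e4: "b/s*q/(a/s) = b*q/a" using s0 by auto
  show "tq q (a/s, b/s, c/s, l/s) = (u1,u3,u2,u4)" unfolding tq_def prod.case e1 e2 e3 e4 u ..
qed

lemma step_inv:
  assumes q: "(q::'a::field) \<noteq> 0" and st: "orbit_step q u v" and nu: "nzq u"
  shows "nzq v \<and> Inv q u = Inv q v"
proof -
  obtain a b c l where u: "u = (a,b,c,l)" by (cases u) auto
  have nz: "a \<noteq> 0" "b \<noteq> 0" "c \<noteq> 0" "l \<noteq> 0" using nu u by (auto simp: nzq_def)
  obtain u1 u2 u3 u4 where tu: "tq q u = (u1,u2,u3,u4)" by (cases "tq q u") auto
  from st[unfolded orbit_step_def u prod.case]
  consider "v = (-a,-b,-c,-l)" | "v = (a,b,inverse c,l)" | "v = (inverse a,b,c,l)"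
    | s where "s^2 = a*b*c*l*q" "v = (a/s, b/s, c/s, l/s)" by blast
  then show ?thesis
  proof cases
    case 1
    then show ?thesis using nz u by (simp add: nzq_def Inv_def b0_def tq_def)
  next
    case 2
    have "v = m12 u" using 2 u by (simp add: m12_def)
    then show ?thesis using m12_props[OF nu tu] tu by (simp add: Inv_def perm_S)
  next
    case 3
    have "v = m34 u" using 3 u by (simp add: m34_def)
    then show ?thesis using m34_props[OF nu tu] tu by (simp add: Inv_def perm_S)
  next
    case 4
    note d = div_props[OF q nz 4(1) tu[unfolded u]]
    show ?thesis using d tu u 4(2) by (simp add: Inv_def perm_S)
  qed
qed

lemma step_nz_rev:
  assumes st: "orbit_step q v u" and nu: "nzq u"
  shows "nzq v"
proof -
  obtain a b c l where v: "v = (a,b,c,l)" by (cases v) auto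
  from st[unfolded orbit_step_def v prod.case]
  consider "u = (-a,-b,-c,-l)" | "u = (a,b,inverse c,l)" | "u = (inverse a,b,c,l)"
    | s where "s^2 = a*b*c*l*q" "u = (a/s, b/s, c/s, l/s)" by blast
  then show ?thesis
    by cases (use nu v in \<open>auto simp: nzq_def\<close>)
qed

lemma approx_inv:
  assumes q: "(q::'a::field) \<noteq> 0" and ap: "approx q x y" and nx: "nzq x"
  shows "nzq y \<and> Inv q x = Inv q y"
  using ap[unfolded approx_def]
proof (induction rule: rtranclp_induct)
  case base
  then show ?case using nx by simp
next
  case (step y z)
  then have ny: "nzq y" and I: "Inv q x = Inv q y" by auto
  from step.hyps(2) show ?case
  proof
    assume "orbit_step q y z"
    then show ?thesis using step_inv[OF q _ ny] I by auto
  next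
    assume st: "orbit_step q z y"
    have nz: "nzq z" by (rule step_nz_rev[OF st ny])
    then show ?thesis using step_inv[OF q st nz] I by auto
  qed
qed

lemma approx_iff_inv:
  assumes ac: "alg_closed_field TYPE('a::field)" and q: "(q::'a) \<noteq> 0" and nx: "nzq x" and ny: "nzq y"
  shows "approx q x y \<longleftrightarrow> Inv q x = Inv q y"
  using approx_inv[OF q _ nx] reach[OF ac q nx ny] by blast

lemma hom_iff_inv:
  fixes q :: "'a::field"
  assumes q: "q \<noteq> 0" "q^2 - inverse q^2 \<noteq> 0" "q + inverse q \<noteq> 0" "q^4 \<noteq> 1"
    and nx: "nzq x" and ny: "nzq y"
  shows "(\<exists>f. is_hom q x y f \<and> f (basis_vec 0) = basis_vec 0) \<longleftrightarrow> Inv q x = Inv q y"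
proof
  assume "\<exists>f. is_hom q x y f \<and> f (basis_vec 0) = basis_vec 0"
  then obtain f where f: "is_hom q x y f" "f (basis_vec 0) = basis_vec 0" by blast
  note c = hom_nec[OF q(1,2,3) nx ny f]
  show "Inv q x = Inv q y" by (rule conds_to_inv[OF q nx ny c])
next
  assume I: "Inv q x = Inv q y"
  note c = inv_to_conds[OF q(1,2,3) nx ny I]
  have "is_hom q x y (Fm q x y)" by (rule Fm_hom[OF q(1,2,3) nx ny c(1) HC_suff[OF c(2,3)] c(4,5)])
  moreover have "Fm q x y (basis_vec 0) = basis_vec 0" by (simp add: Fm_basis)
  ultimately show "\<exists>f. is_hom q x y f \<and> f (basis_vec 0) = basis_vec 0" by blast
qed

lemma iso_iff_inv:
  fixes q :: "'a::field"
  assumes q: "q \<noteq> 0" "q^2 - inverse q^2 \<noteq> 0" "q + inverse q \<noteq> 0" "q^4 \<noteq> 1"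
    and nx: "nzq x" and ny: "nzq y"
  shows "(\<exists>f. is_iso q x y f \<and> f (basis_vec 0) = basis_vec 0) \<longleftrightarrow> Inv q x = Inv q y"
proof
  assume "\<exists>f. is_iso q x y f \<and> f (basis_vec 0) = basis_vec 0"
  then have "\<exists>f. is_hom q x y f \<and> f (basis_vec 0) = basis_vec 0" by (auto simp: is_iso_def)
  then show "Inv q x = Inv q y" using hom_iff_inv[OF q nx ny] by blast
next
  assume I: "Inv q x = Inv q y"
  obtain f where f: "is_hom q x y f" "f (basis_vec 0) = basis_vec 0" using hom_iff_inv[OF q nx ny] I by blast
  obtain g where g: "is_hom q y x g" "g (basis_vec 0) = basis_vec 0" using hom_iff_inv[OF q ny nx] I[symmetric] by blast
  have "is_iso q x y f" by (rule homs_iso[OF f(1) g(1) f(2) g(2)])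
  then show "\<exists>f. is_iso q x y f \<and> f (basis_vec 0) = basis_vec 0" using f(2) by blast
qed

lemma q4_sq: fixes q :: "'a::field" shows "q^4 = q^2 * q^2"
  unfolding power_add[symmetric] by simp

lemma qK_nz: fixes q :: "'a::field" assumes q0: "q \<noteq> 0" and q4: "q^4 \<noteq> 1" shows "q^2 - inverse q^2 \<noteq> 0"
proof
  assume h: "q^2 - inverse q^2 = 0"
  have "q^2 * (q^2 - inverse q^2) = q^2*q^2 - q^2 * inverse q^2" by (rule right_diff_distrib)
  moreover have "q^2 * inverse q^2 = 1" using q0 by (simp add: power_mult_distrib[symmetric])
  ultimately have "q^4 - 1 = 0" unfolding h q4_sq by simp
  then show False using q4 by simp
qed

lemma qS_nz: fixes q :: "'a::field" assumes q0: "q \<noteq> 0" and q4: "q^4 \<noteq> 1" shows "q + inverse q \<noteq> 0"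
proof
  assume "q + inverse q = 0"
  then have "q * (q + inverse q) = 0" by simp
  moreover have "q * (q + inverse q) = q^2 + 1" using q0 by (simp add: power2_eq_square distrib_left)
  ultimately have "q^2 + 1 = 0" by simp
  then have "q^2 = -1" by (simp add: eq_neg_iff_add_eq_0)
  then have "q^4 = 1" by (simp add: q4_sq)
  then show False using q4 by simp
qed

theorem theorem7p1:
  fixes q a b c l a' b' c' l' :: "'a::field"
  assumes "alg_closed_field TYPE('a)"
    and "\<exists>d::nat. d > 0 \<and> q ^ d = 1"
    and "q ^ 4 \<noteq> 1"
    and "a \<noteq> 0" "b \<noteq> 0" "c \<noteq> 0" "l \<noteq> 0"
    and "a' \<noteq> 0" "b' \<noteq> 0" "c' \<noteq> 0" "l' \<noteq> 0"
  shows "(approx q (a,b,c,l) (a',b',c',l')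
            \<longleftrightarrow> (\<exists>f. is_hom q (a,b,c,l) (a',b',c',l') f \<and> f (basis_vec 0) = basis_vec 0))
       \<and> (approx q (a,b,c,l) (a',b',c',l')
            \<longleftrightarrow> (\<exists>f. is_hom q (a',b',c',l') (a,b,c,l) f \<and> f (basis_vec 0) = basis_vec 0))
       \<and> (approx q (a,b,c,l) (a',b',c',l')
            \<longleftrightarrow> (\<exists>f. is_iso q (a,b,c,l) (a',b',c',l') f \<and> f (basis_vec 0) = basis_vec 0))
       \<and> (approx q (a,b,c,l) (a',b',c',l')
            \<longleftrightarrow> (\<exists>f. is_iso q (a',b',c',l') (a,b,c,l) f \<and> f (basis_vec 0) = basis_vec 0))"
proof -
  note ac = assms(1)
  have q0: "q \<noteq> 0"
  proof
    assume "q = 0"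
    with assms(2) obtain d :: nat where "d > 0" "(0::'a) ^ d = 1" by blast
    then show False by (simp add: power_0_left)
  qed
  have q4: "q^4 \<noteq> 1" by (rule assms(3))
  have qK: "q^2 - inverse q^2 \<noteq> 0" by (rule qK_nz[OF q0 q4])
  have qS: "q + inverse q \<noteq> 0" by (rule qS_nz[OF q0 q4])
  note qq = q0 qK qS q4
  have nx: "nzq (a,b,c,l)" and ny: "nzq (a',b',c',l')" using assms(4-11) by (auto simp: nzq_def)
  have sym: "Inv q (a,b,c,l) = Inv q (a',b',c',l') \<longleftrightarrow> Inv q (a',b',c',l') = Inv q (a,b,c,l)" by auto
  show ?thesis
    using approx_iff_inv[OF ac q0 nx ny] hom_iff_inv[OF qq nx ny] hom_iff_inv[OF qq ny nx]
      iso_iff_inv[OF qq nx ny] iso_iff_inv[OF qq ny nx] sym by blast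
qed

end
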